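(* Consider any sequences $\{(x_k,y_k,\gamma_k)\}_{k\ge0}$, $\{(\tilde x_k,u_k,\tilde\gamma_k)\}_{k\ge1}$ generated by the inexact symmetric proximal ADMM described in the context. Define, for every $k\ge1$, $$v_k=\Big(H+\tfrac{(\tau-\tau\theta+\theta)\beta}{\tau+\theta}B^*B\Big)(y_{k-1}-y_k)-\tfrac{\tau}{\tau+\theta}B^*(\gamma_{k-1}-\gamma_k),\qquad w_k=-\tfrac{\tau}{\tau+\theta}B(y_{k-1}-y_k)+\tfrac{1}{(\tau+\theta)\beta}(\gamma_{k-1}-\gamma_k).$$ Let $\sigma\in[\hat\sigma,1)$ be a scalar with $\varphi(\sigma)\ge0$, $\widehat\varphi(\sigma)\ge0$, $\widetilde\varphi(\sigma)>0$, $\overline\varphi(\sigma)\ge0$ (such $\sigma$ exists). Then for every $k\ge1$, $$u_k\in\partial f(\tilde x_k)-A^*\tilde\gamma_k,\qquad v_k\in\partial g(y_k)-B^*\tilde\gamma_k,\qquad w_k=A\tilde x_k+By_k-b,$$ and there exists $i\le k$ such that $$\max\{\|u_i\|,\|v_i\|,\|w_i\|\}\le\sqrt{\frac{2\lambda_M d_0\,\mathcal C_1}{k}},$$ where $\mathcal C_1=\Big[1+\sigma+\frac{8(1+\tau+\vartheta)\varphi(\sigma)}{(\tau+\theta)(1+\tau)\vartheta}\Big]\Big/(1-\sigma)$ and $\lambda_M$ is the largest eigenvalue of $M$.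
   Context: Let $f:\mathbb{R}^n\to(-\infty,\infty]$ and $g:\mathbb{R}^p\to(-\infty,\infty]$ be proper closed convex functions, $A\in\mathbb{R}^{m\times n}$, $B\in\mathbb{R}^{m\times p}$, $b\in\mathbb{R}^m$ (problem: $\min\{f(x)+g(y):Ax+By=b\}$). Standing assumption: there exists $(x^*,y^*,\gamma^* )$ solving the Lagrangian system $0\in\partial f(x)-A^*\gamma$, $0\in\partial g(y)-B^*\gamma$, $0=Ax+By-b$. Here $\partial$ is the subdifferential, $A^*$ the transpose, $\mathbb{S}^n_{++}$ ($\mathbb{S}^p_+$) the symmetric positive definite (semidefinite) matrices, and $\|z\|_Q=\sqrt{\langle Qz,z\rangle}$ for $Q$ positive semidefinite. Algorithm (inexact symmetric proximal ADMM): given $(x_0,y_0,\gamma_0)\in\mathbb{R}^n\times\mathbb{R}^p\times\mathbb{R}^m$, $\beta>0$, $\tilde\sigma,\hat\sigma\in[0,1)$, $G\in\mathbb{S}^n_{++}$, $H\in\mathbb{S}^p_+$, and $(\tau,\theta)\in\mathcal R_{\tilde\sigma}:=\{(\tau,\theta):\tau\in(-1,1-\tilde\sigma),\ \tau+\theta>0,\ (1-\tau^2)(2-\tau-\theta-\tilde\sigma)-(1-\theta)^2(1-\tau-\tilde\sigma)>0\}$. For $k=1,2,\dots$: compute $(\tilde x_k,u_k)$ with $u_k\in\partial f(\tilde x_k)-A^*\tilde\gamma_k$ and $\|\tilde x_k-x_{k-1}+G^{-1}u_k\|_G^2\le\frac{\tilde\sigma}{\beta}\|\tilde\gamma_k-\gamma_{k-1}\|^2+\hat\sigma\|\tilde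 x_k-x_{k-1}\|_G^2$, where $\tilde\gamma_k=\gamma_{k-1}-\beta(A\tilde x_k+By_{k-1}-b)$; set $\gamma_{k-1/2}=\gamma_{k-1}-\tau\beta(A\tilde x_k+By_{k-1}-b)$; let $y_k$ be an optimal solution of $\min_y\{g(y)-\langle\gamma_{k-1/2},By\rangle+\frac\beta2\|A\tilde x_k+By-b\|^2+\frac12\|y-y_{k-1}\|_H^2\}$; set $x_k=x_{k-1}-G^{-1}u_k$ and $\gamma_k=\gamma_{k-1/2}-\theta\beta(A\tilde x_k+By_k-b)$. Definitions: $T(x,y,\gamma)=(\partial f(x)-A^*\gamma,\ \partial g(y)-B^*\gamma,\ Ax+By-b)$; $M=\begin{bmatrix}G&0&0\\0&H+\frac{(\tau-\tau\theta+\theta)\beta}{\tau+\theta}B^*B&-\frac{\tau}{\tau+\theta}B^*\\0&-\frac{\tau}{\tau+\theta}B&\frac{1}{(\tau+\theta)\beta}I\end{bmatrix}$; $z_0=(x_0,y_0,\gamma_0)$; $d_0=\inf\{\|z^*-z_0\|_M^2: z^*\in T^{-1}(0)\}$; $\vartheta=\sqrt{(3-3\tau-2\tilde\sigma)(4-\tau-\theta-2\tilde\sigma)}-2(1-\tau-\tilde\sigma)$; and for $\sigma\in\mathbb{R}$: $\varphi(\sigma)=(1-\tau)(\sigma-1)+(1-\tau-\tilde\sigma)(\tau+\theta)$, $\widehat\varphi(\sigma)=(1-\tau)[(1+\theta)\sigma-1+\tau]-\tilde\sigma(\tau+\theta)$, $\widetilde\varphi(\sigma)=\sigma-(1-\tau-\theta)^2-\tilde\sigma(\tau+\theta)$,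 $\overline\varphi(\sigma)=[(1+\tau)\widehat\varphi(\sigma)-2\tau\varphi(\sigma)](1+\tau)\widetilde\varphi(\sigma)-(1-\theta)^2\varphi(\sigma)^2$. *)

theory Defs
  imports "HOL-Analysis.Analysis" "HOL-Library.Extended_Real"
begin

definition proper_fun :: "('a \<Rightarrow> ereal) \<Rightarrow> bool" where
  "proper_fun f \<longleftrightarrow> (\<forall>x. f x \<noteq> -\<infinity>) \<and> (\<exists>x. f x \<noteq> \<infinity>)"

definition epigraph_e :: "('a \<Rightarrow> ereal) \<Rightarrow> ('a \<times> real) set" where
  "epigraph_e f = {(x, t). f x \<le> ereal t}"

definition convex_fun :: "('a::real_vector \<Rightarrow> ereal) \<Rightarrow> bool" where
  "convex_fun f \<longleftrightarrow> convex (epigraph_e f)"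

definition closed_fun :: "('a::topological_space \<Rightarrow> ereal) \<Rightarrow> bool" where
  "closed_fun f \<longleftrightarrow> closed (epigraph_e f)"

definition subdiff :: "('a::real_inner \<Rightarrow> ereal) \<Rightarrow> 'a \<Rightarrow> 'a set" where
  "subdiff f x = {v. f x \<noteq> \<infinity> \<and> (\<forall>z. f x + ereal (inner v (z - x)) \<le> f z)}"

definition sym_mat :: "real^'n^'n \<Rightarrow> bool" where
  "sym_mat Q \<longleftrightarrow> transpose Q = Q"

definition pos_def :: "real^'n^'n \<Rightarrow> bool" where
  "pos_def Q \<longleftrightarrow> sym_mat Q \<and> (\<forall>z. z \<noteq> 0 \<longrightarrow> inner (Q *v z) z > 0)"

definition pos_semidef :: "real^'n^'n \<Rightarrow> bool" where
  "pos_semidef Q \<longleftrightarrow> sym_mat Q \<and> (\<forall>z. inner (Q *v z) z \<ge> 0)"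

definition qnorm2 :: "real^'n^'n \<Rightarrow> real^'n \<Rightarrow> real" where
  "qnorm2 Q z = inner (Q *v z) z"

definition region_R :: "real \<Rightarrow> real \<Rightarrow> real \<Rightarrow> bool" where
  "region_R st \<tau> \<theta> \<longleftrightarrow> -1 < \<tau> \<and> \<tau> < 1 - st \<and> \<tau> + \<theta> > 0 \<and>
     (1 - \<tau>\<^sup>2) * (2 - \<tau> - \<theta> - st) - (1 - \<theta>)\<^sup>2 * (1 - \<tau> - st) > 0"

definition kkt_set :: "(real^'n \<Rightarrow> ereal) \<Rightarrow> (real^'p \<Rightarrow> ereal) \<Rightarrow> real^'n^'m \<Rightarrow> real^'p^'m
   \<Rightarrow> real^'m \<Rightarrow> ((real^'n) \<times> (real^'p) \<times> (real^'m)) set" where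
  "kkt_set f g A B b = {(x, y, \<gamma>). transpose A *v \<gamma> \<in> subdiff f x \<and>
      transpose B *v \<gamma> \<in> subdiff g y \<and> A *v x + B *v y - b = 0}"

definition M_op :: "real^'n^'n \<Rightarrow> real^'p^'p \<Rightarrow> real^'p^'m \<Rightarrow> real \<Rightarrow> real \<Rightarrow> real
   \<Rightarrow> (real^'n) \<times> (real^'p) \<times> (real^'m) \<Rightarrow> (real^'n) \<times> (real^'p) \<times> (real^'m)" where
  "M_op G H B \<beta> \<tau> \<theta> = (\<lambda>(x, y, \<gamma>).
     (G *v x,
      (H + ((\<tau> - \<tau> * \<theta> + \<theta>) * \<beta> / (\<tau> + \<theta>)) *\<^sub>R (transpose B ** B)) *v y
        - (\<tau> / (\<tau> + \<theta>)) *\<^sub>R (transpose B *v \<gamma>),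
      - (\<tau> / (\<tau> + \<theta>)) *\<^sub>R (B *v y) + (1 / ((\<tau> + \<theta>) * \<beta>)) *\<^sub>R \<gamma>))"

definition largest_eigenvalue :: "('a::real_vector \<Rightarrow> 'a) \<Rightarrow> real" where
  "largest_eigenvalue L = Max {e. \<exists>z. z \<noteq> 0 \<and> L z = e *\<^sub>R z}"

definition d0_val :: "(real^'n \<Rightarrow> ereal) \<Rightarrow> (real^'p \<Rightarrow> ereal) \<Rightarrow> real^'n^'m \<Rightarrow> real^'p^'m
   \<Rightarrow> real^'m \<Rightarrow> real^'n^'n \<Rightarrow> real^'p^'p \<Rightarrow> real \<Rightarrow> real \<Rightarrow> real
   \<Rightarrow> (real^'n) \<times> (real^'p) \<times> (real^'m) \<Rightarrow> real" where
  "d0_val f g A B b G H \<beta> \<tau> \<theta> z0 =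
     Inf {inner (M_op G H B \<beta> \<tau> \<theta> (zs - z0)) (zs - z0) | zs. zs \<in> kkt_set f g A B b}"

definition vartheta :: "real \<Rightarrow> real \<Rightarrow> real \<Rightarrow> real" where
  "vartheta st \<tau> \<theta> = sqrt ((3 - 3 * \<tau> - 2* st) * (4 - \<tau> - \<theta> - 2* st)) - 2 * (1 - \<tau> - st)"

definition phi :: "real \<Rightarrow> real \<Rightarrow> real \<Rightarrow> real \<Rightarrow> real" where
  "phi st \<tau> \<theta> \<sigma> = (1 - \<tau>) * (\<sigma> - 1) + (1 - \<tau> - st) * (\<tau> + \<theta>)"

definition phi_hat :: "real \<Rightarrow> real \<Rightarrow> real \<Rightarrow> real \<Rightarrow> real" where
  "phi_hat st \<tau> \<theta> \<sigma> = (1 - \<tau>) * ((1 + \<theta>) * \<sigma> - 1 + \<tau>) - st * (\<tau> + \<theta>)"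

definition phi_tilde :: "real \<Rightarrow> real \<Rightarrow> real \<Rightarrow> real \<Rightarrow> real" where
  "phi_tilde st \<tau> \<theta> \<sigma> = \<sigma> - (1 - \<tau> - \<theta>)\<^sup>2 - st * (\<tau> + \<theta>)"

definition phi_bar :: "real \<Rightarrow> real \<Rightarrow> real \<Rightarrow> real \<Rightarrow> real" where
  "phi_bar st \<tau> \<theta> \<sigma> =
     ((1 + \<tau>) * phi_hat st \<tau> \<theta> \<sigma> - 2 * \<tau> * phi st \<tau> \<theta> \<sigma>) * (1 + \<tau>) * phi_tilde st \<tau> \<theta> \<sigma>
     - (1 - \<theta>)\<^sup>2 * (phi st \<tau> \<theta> \<sigma>)\<^sup>2"

definition C1_const :: "real \<Rightarrow> real \<Rightarrow> real \<Rightarrow> real \<Rightarrow> real" where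
  "C1_const st \<tau> \<theta> \<sigma> =
     (1 + \<sigma> + 8 * (1 + \<tau> + vartheta st \<tau> \<theta>) * phi st \<tau> \<theta> \<sigma>
        / ((\<tau> + \<theta>) * (1 + \<tau>) * vartheta st \<tau> \<theta>)) / (1 - \<sigma>)"

end

theory Submission
  imports Defs
begin



lemma quad_disc:
  fixes A Bc C :: real
  assumes "\<And>t. 0 \<le> A + 2*t*Bc + t^2*C"
  shows "Bc^2 \<le> A*C"
proof (cases "C = 0")
  case True
  have "Bc = 0"
  proof (rule ccontr)
    assume nz: "Bc \<noteq> 0"
    have "0 \<le> A + 2*(-(A+1)/(2*Bc))*Bc" using assms[of "-(A+1)/(2*Bc)"] True by simp
    also have "\<dots> = -1" using nz by (simp add: field_simps)
    finally show False by simp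
  qed
  then show ?thesis using True by simp
next
  case False
  have C0: "C \<ge> 0"
  proof (rule ccontr)
    assume "\<not> C \<ge> 0" hence Cn: "C < 0" by simp
    define t where "t = sqrt ((\<bar>A\<bar> + 1) / (- C))"
    have t2: "t^2 = (\<bar>A\<bar> + 1) / (- C)" unfolding t_def using Cn by (simp add: divide_nonneg_neg)
    have "t^2 * C = - (\<bar>A\<bar> + 1)" using Cn t2 by (simp add: field_simps)
    moreover have "0 \<le> A + 2*t*Bc + t^2*C" "0 \<le> A + 2*(-t)*Bc + (-t)^2*C" using assms by blast+
    ultimately have "A + 2*t*Bc + t^2*C < 0 \<or> A + 2*(-t)*Bc + (-t)^2*C < 0" by auto
    thus False using assms by (meson not_le)
  qed
  hence Cp: "C > 0" using False by simp
  have "0 \<le> A + 2*(-Bc/C)*Bc + (-Bc/C)^2*C" using assms by blast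
  also have "\<dots> = A - Bc^2/C" using Cp by (simp add: field_simps power2_eq_square)
  finally have "Bc^2/C \<le> A" by simp
  thus ?thesis using Cp by (simp add: field_simps mult.commute)
qed

lemma psd_cs:
  fixes M :: "'a::real_inner \<Rightarrow> 'a"
  assumes lin: "linear M" and sym: "\<And>x y. inner (M x) y = inner x (M y)"
    and psd: "\<And>x. 0 \<le> inner (M x) x"
  shows "(inner (M a) b)^2 \<le> inner (M a) a * inner (M b) b"
proof -
  have "0 \<le> inner (M a) a + 2*t*inner (M a) b + t^2 * inner (M b) b" for t
  proof -
    have "0 \<le> inner (M (a + t *\<^sub>R b)) (a + t *\<^sub>R b)" by (rule psd)
    also have "M (a + t *\<^sub>R b) = M a + t *\<^sub>R M b" using lin by (simp add: linear_add linear_scale)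
    also have "inner (M a + t *\<^sub>R M b) (a + t *\<^sub>R b) = inner (M a) a + t * inner (M a) b + t * inner (M b) a + t^2 * inner (M b) b"
      by (simp add: inner_add_left inner_add_right power2_eq_square algebra_simps)
    also have "inner (M b) a = inner (M a) b" by (metis sym inner_commute)
    finally show ?thesis by simp
  qed
  thus ?thesis by (rule quad_disc)
qed

lemma eig_bound:
  fixes M :: "'a::euclidean_space \<Rightarrow> 'a"
  assumes lin: "linear M" and sym: "\<And>x y. inner (M x) y = inner x (M y)"
    and psd: "\<And>x. 0 \<le> inner (M x) x"
  shows "0 \<le> largest_eigenvalue M \<and> (\<forall>w. (norm (M w))^2 \<le> largest_eigenvalue M * inner (M w) w)"
proof -
  have cont: "continuous_on (sphere 0 1) (\<lambda>y. inner (M y) y)"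
    by (intro continuous_intros linear_continuous_on) (use lin linear_conv_bounded_linear in auto)
  have ne: "sphere (0::'a) 1 \<noteq> {}" by simp
  obtain z0 where z0: "z0 \<in> sphere 0 1" and zmax: "\<And>y. y \<in> sphere 0 1 \<Longrightarrow> inner (M y) y \<le> inner (M z0) z0"
    using continuous_attains_sup[OF compact_sphere ne cont] by blast
  define \<mu> where "\<mu> = inner (M z0) z0"
  have nz0: "norm z0 = 1" using z0 by simp
  have bnd: "inner (M w) w \<le> \<mu> * (norm w)^2" for w
  proof (cases "w = 0")
    case True then show ?thesis using lin by (simp add: linear_0)
  next
    case False
    define y where "y = (1 / norm w) *\<^sub>R w"
    have "y \<in> sphere 0 1" using False unfolding y_def by simp
    hence "inner (M y) y \<le> \<mu>" using zmax \<mu>_def by blast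
    moreover have "inner (M y) y = inner (M w) w / (norm w)^2"
      unfolding y_def using lin by (simp add: linear_scale power2_eq_square)
    ultimately show ?thesis using False by (simp add: field_simps)
  qed
  have eig: "M z0 = \<mu> *\<^sub>R z0"
  proof -
    define h where "h = M z0 - \<mu> *\<^sub>R z0"
    have Q: "0 \<le> 0 + 2*t*(- inner h h) + t^2*(\<mu> * inner h h - inner (M h) h)" for t
    proof -
      have "0 \<le> \<mu> * (norm (z0 + t *\<^sub>R h))^2 - inner (M (z0 + t *\<^sub>R h)) (z0 + t *\<^sub>R h)"
        using bnd[of "z0 + t *\<^sub>R h"] by simp
      also have "M (z0 + t *\<^sub>R h) = M z0 + t *\<^sub>R M h" using lin by (simp add: linear_add linear_scale)
      also have "\<mu> * (norm (z0 + t *\<^sub>R h))^2 - inner (M z0 + t *\<^sub>R M h) (z0 + t *\<^sub>R h)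
          = (\<mu> * inner z0 z0 - inner (M z0) z0) + 2*t*(\<mu> * inner z0 h - inner (M z0) h) + t^2*(\<mu> * inner h h - inner (M h) h)"
        unfolding power2_norm_eq_inner by (simp add: inner_add_left inner_add_right power2_eq_square algebra_simps sym[of h z0] inner_commute[of h "M z0"] inner_commute[of h z0])
      also have "\<mu> * inner z0 z0 - inner (M z0) z0 = 0" using nz0 \<mu>_def by (simp add: power2_norm_eq_inner[symmetric])
      also have "\<mu> * inner z0 h - inner (M z0) h = - inner h h" unfolding h_def by (simp add: inner_diff_left algebra_simps)
      finally show ?thesis .
    qed
    have "(- inner h h)^2 \<le> 0 * (\<mu> * inner h h - inner (M h) h)" by (rule quad_disc) (use Q in simp)
    hence "inner h h = 0" by simp
    thus ?thesis unfolding h_def by simp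
  qed
  define E where "E = {e. \<exists>z. z \<noteq> 0 \<and> M z = e *\<^sub>R z}"
  have muE: "\<mu> \<in> E" unfolding E_def using eig nz0 by (intro CollectI exI[of _ z0]) auto
  define V where "V e = (SOME z. z \<noteq> 0 \<and> M z = e *\<^sub>R z)" for e
  have V: "V e \<noteq> 0 \<and> M (V e) = e *\<^sub>R V e" if "e \<in> E" for e
    using that unfolding E_def V_def by (metis (mono_tags, lifting) mem_Collect_eq someI_ex)
  have injV: "inj_on V E"
  proof (rule inj_onI)
    fix e1 e2 assume "e1 \<in> E" "e2 \<in> E" "V e1 = V e2"
    with V have "e1 *\<^sub>R V e1 = e2 *\<^sub>R V e1" "V e1 \<noteq> 0" by metis+
    thus "e1 = e2" by (metis scaleR_cancel_right)
  qed
  have orth: "pairwise orthogonal (V ` E)"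
  proof (clarsimp simp: pairwise_def)
    fix e1 e2 assume e: "e1 \<in> E" "e2 \<in> E" "V e1 \<noteq> V e2"
    hence ne: "e1 \<noteq> e2" by auto
    have "e1 * inner (V e1) (V e2) = inner (M (V e1)) (V e2)" using V[OF e(1)] by simp
    also have "\<dots> = inner (V e1) (M (V e2))" by (rule sym)
    also have "\<dots> = e2 * inner (V e1) (V e2)" using V[OF e(2)] by simp
    finally have "inner (V e1) (V e2) = 0" using ne by simp
    thus "orthogonal (V e1) (V e2)" by (simp add: orthogonal_def)
  qed
  have "0 \<notin> V ` E" using V by auto
  hence "independent (V ` E)" using orth pairwise_orthogonal_independent by blast
  hence "finite (V ` E)" by (rule finiteI_independent)
  hence finE: "finite E" using injV finite_imageD by blast
  have "\<mu> \<le> largest_eigenvalue M" unfolding largest_eigenvalue_def E_def[symmetric]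
    using finE muE by simp
  moreover have "0 \<le> \<mu>" unfolding \<mu>_def by (rule psd)
  moreover have nb: "(norm (M w))^2 \<le> \<mu> * inner (M w) w" for w
  proof (cases "M w = 0")
    case True then show ?thesis using psd[of w] \<open>0 \<le> \<mu>\<close> by simp
  next
    case False
    have "(inner (M w) (M w))^2 \<le> inner (M w) w * inner (M (M w)) (M w)"
      using psd_cs[OF lin sym psd] by blast
    also have "\<dots> \<le> inner (M w) w * (\<mu> * inner (M w) (M w))"
      using bnd[of "M w"] psd[of w] by (simp add: power2_norm_eq_inner mult_left_mono)
    finally have "inner (M w) (M w) * inner (M w) (M w) \<le> (\<mu> * inner (M w) w) * inner (M w) (M w)"
      by (simp add: power2_eq_square algebra_simps)
    moreover have "inner (M w) (M w) > 0" using False by simp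
    ultimately have "inner (M w) (M w) \<le> \<mu> * inner (M w) w" by simp
    thus ?thesis by (simp add: power2_norm_eq_inner)
  qed
  ultimately show ?thesis
    using order_trans[OF nb mult_right_mono[OF \<open>\<mu> \<le> largest_eigenvalue M\<close> psd]] by auto
qed



lemma proper_real:
  assumes "proper_fun f" "f x \<noteq> \<infinity>"
  shows "f x = ereal (real_of_ereal (f x))"
  using assms unfolding proper_fun_def by (cases "f x") auto

lemma subdiff_mono:
  assumes pf: "proper_fun f" and v1: "v1 \<in> subdiff f x1" and v2: "v2 \<in> subdiff f x2"
  shows "0 \<le> inner (v1 - v2) (x1 - x2)"
proof -
  have "f x1 \<noteq> \<infinity>" "f x2 \<noteq> \<infinity>" using v1 v2 unfolding subdiff_def by blast+
  hence f1: "f x1 = ereal (real_of_ereal (f x1))" and f2: "f x2 = ereal (real_of_ereal (f x2))"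
    using proper_real[OF pf] by blast+
  have "f x1 + ereal (inner v1 (x2 - x1)) \<le> f x2" using v1 unfolding subdiff_def by blast
  hence a: "real_of_ereal (f x1) + inner v1 (x2 - x1) \<le> real_of_ereal (f x2)"
    by (subst (asm) f1, subst (asm) f2) simp
  have "f x2 + ereal (inner v2 (x1 - x2)) \<le> f x1" using v2 unfolding subdiff_def by blast
  hence b: "real_of_ereal (f x2) + inner v2 (x1 - x2) \<le> real_of_ereal (f x1)"
    by (subst (asm) f1, subst (asm) f2) simp
  have "inner v1 (x2 - x1) = - inner v1 (x1 - x2)" by (simp add: inner_diff_right)
  with a b show ?thesis by (simp add: inner_diff_left)
qed

lemma small_t_le:
  fixes X Q :: real
  assumes "\<And>t. 0 < t \<Longrightarrow> t \<le> 1 \<Longrightarrow> X \<le> t * Q"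
  shows "X \<le> 0"
proof (rule ccontr)
  assume "\<not> X \<le> 0" hence X: "X > 0" by simp
  have Q: "Q \<ge> X" using assms[of 1] by simp
  define t where "t = X / (2*Q)"
  have "0 < t" "t \<le> 1" using X Q unfolding t_def by (auto simp: field_simps)
  hence "X \<le> t * Q" by (rule assms)
  also have "t * Q = X / 2" using X Q unfolding t_def by (simp add: field_simps)
  finally show False using X by simp
qed

lemma opt_subgrad:
  fixes g :: "'a::real_inner \<Rightarrow> ereal"
  assumes pg: "proper_fun g" and cg: "convex_fun g"
    and opt: "\<And>y'. g y + ereal (h y) \<le> g y' + ereal (h y')"
    and quad: "\<And>e t. h (y + t *\<^sub>R e) = h y + t * inner c e + t^2 * Qf e"
  shows "- c \<in> subdiff g y"
proof -
  obtain y0 where y0: "g y0 \<noteq> \<infinity>" using pg unfolding proper_fun_def by blast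
  have "g y \<noteq> \<infinity>"
  proof
    assume "g y = \<infinity>"
    hence "g y + ereal (h y) = \<infinity>" by simp
    moreover have "g y0 + ereal (h y0) \<noteq> \<infinity>" using y0 pg unfolding proper_fun_def by (cases "g y0") auto
    ultimately show False using opt[of y0] by simp
  qed
  hence gy: "g y = ereal (real_of_ereal (g y))" by (rule proper_real[OF pg])
  define a where "a = real_of_ereal (g y)"
  have "g y + ereal (inner (- c) (z - y)) \<le> g z" for z
  proof (cases "g z = \<infinity>")
    case True then show ?thesis by simp
  next
    case False
    hence gz: "g z = ereal (real_of_ereal (g z))" by (rule proper_real[OF pg])
    define bz where "bz = real_of_ereal (g z)"
    have key: "a - bz - inner c (z - y) \<le> t * Qf (z - y)" if t: "0 < t" "t \<le> 1" for t
    proof -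
      have e1: "(y, a) \<in> epigraph_e g" unfolding epigraph_e_def a_def using gy by simp
      have e2: "(z, bz) \<in> epigraph_e g" unfolding epigraph_e_def bz_def using gz by simp
      have "(1 - t) *\<^sub>R (y, a) + t *\<^sub>R (z, bz) \<in> epigraph_e g"
        using cg unfolding convex_fun_def by (rule convexD) (use e1 e2 t in auto)
      moreover have "(1 - t) *\<^sub>R (y, a) + t *\<^sub>R (z, bz) = (y + t *\<^sub>R (z - y), (1 - t) * a + t * bz)"
        by (simp add: algebra_simps)
      ultimately have cv: "g (y + t *\<^sub>R (z - y)) \<le> ereal ((1 - t) * a + t * bz)"
        unfolding epigraph_e_def by simp
      have "ereal (a + h y) \<le> g (y + t *\<^sub>R (z - y)) + ereal (h (y + t *\<^sub>R (z - y)))"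
        using opt[of "y + t *\<^sub>R (z - y)"] by (subst (asm) gy) (simp add: a_def)
      also have "\<dots> \<le> ereal ((1 - t) * a + t * bz) + ereal (h (y + t *\<^sub>R (z - y)))"
        using cv by (rule add_right_mono)
      finally have "a + h y \<le> (1 - t) * a + t * bz + h (y + t *\<^sub>R (z - y))" by simp
      also have "h (y + t *\<^sub>R (z - y)) = h y + t * inner c (z - y) + t^2 * Qf (z - y)" by (rule quad)
      finally have "t * (a - bz - inner c (z - y)) \<le> t * (t * Qf (z - y))"
        by (simp add: algebra_simps power2_eq_square)
      thus ?thesis using t by simp
    qed
    have "a - bz - inner c (z - y) \<le> 0" by (rule small_t_le[of _ "Qf (z - y)"]) (rule key)
    thus ?thesis by (subst gy, subst gz) (simp add: a_def bz_def)
  qed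
  thus ?thesis unfolding subdiff_def using \<open>g y \<noteq> \<infinity>\<close> by blast
qed



lemma adj: "inner (transpose B *v g) y = inner g (B *v (y::real^'p))" for B :: "real^'p^'m"
  by (simp add: dot_lmul_matrix)

lemma sym_inner: assumes "sym_mat H" shows "inner (H *v a) b = inner a (H *v (b::real^'p))"
proof -
  have "inner a (H *v b) = inner (a v* H) b" by (simp add: dot_lmul_matrix)
  also have "a v* H = transpose H *v a" by simp
  also have "transpose H = H" using assms unfolding sym_mat_def by simp
  finally show ?thesis by simp
qed

lemma Mop_bilin:
  "inner (M_op G H B \<beta> \<tau> \<theta> (\<xi>, \<eta>, \<zeta>)) (\<xi>', \<eta>', \<zeta>') =
     inner (G *v \<xi>) \<xi>' + inner (H *v \<eta>) \<eta>'
     + ((\<tau> - \<tau> * \<theta> + \<theta>) * \<beta> / (\<tau> + \<theta>)) * inner (B *v \<eta>) (B *v \<eta>')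
     - (\<tau> / (\<tau> + \<theta>)) * inner \<zeta> (B *v \<eta>') - (\<tau> / (\<tau> + \<theta>)) * inner (B *v \<eta>) \<zeta>'
     + (1 / ((\<tau> + \<theta>) * \<beta>)) * inner \<zeta> \<zeta>'"
proof -
  have "(H + ((\<tau> - \<tau> * \<theta> + \<theta>) * \<beta> / (\<tau> + \<theta>)) *\<^sub>R (transpose B ** B)) *v \<eta>
      = H *v \<eta> + ((\<tau> - \<tau> * \<theta> + \<theta>) * \<beta> / (\<tau> + \<theta>)) *\<^sub>R (transpose B *v (B *v \<eta>))"
    by (simp add: matrix_vector_mult_add_rdistrib scaleR_matrix_vector_assoc matrix_vector_mul_assoc del: transpose_matrix_vector)
  then show ?thesis
    unfolding M_op_def by (simp add: inner_add_left inner_diff_left adj del: transpose_matrix_vector)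
qed

lemma quad_real:
  fixes \<tau> \<theta> \<beta> BB ZB ZZ :: real
  assumes "\<tau> + \<theta> \<noteq> 0" "\<beta> \<noteq> 0"
  shows "((\<tau> - \<tau> * \<theta> + \<theta>) * \<beta> / (\<tau> + \<theta>)) * BB - (\<tau> / (\<tau> + \<theta>)) * ZB - (\<tau> / (\<tau> + \<theta>)) * ZB + (1 / ((\<tau> + \<theta>) * \<beta>)) * ZZ
     = \<beta> * (1 - \<tau>) * BB + (ZZ - 2 * (\<tau> * \<beta>) * ZB + (\<tau> * \<beta>)^2 * BB) / ((\<tau> + \<theta>) * \<beta>)"
proof -
  define s where "s = \<tau> + \<theta>"
  have th: "\<theta> = s - \<tau>" unfolding s_def by simp
  have s0: "s \<noteq> 0" using assms unfolding s_def by simp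
  show ?thesis unfolding s_def[symmetric] unfolding th using s0 assms(2)
    by (simp add: field_simps power2_eq_square)
qed

lemma Mop_quad:
  assumes "\<tau> + \<theta> \<noteq> 0" "\<beta> \<noteq> 0"
  shows "inner (M_op G H B \<beta> \<tau> \<theta> (\<xi>, \<eta>, \<zeta>)) (\<xi>, \<eta>, \<zeta>) =
     qnorm2 G \<xi> + qnorm2 H \<eta> + \<beta> * (1 - \<tau>) * (norm (B *v \<eta>))^2
     + (norm (\<zeta> - (\<tau> * \<beta>) *\<^sub>R (B *v \<eta>)))^2 / ((\<tau> + \<theta>) * \<beta>)"
proof -
  have e: "(norm (\<zeta> - (\<tau> * \<beta>) *\<^sub>R (B *v \<eta>)))^2 = inner \<zeta> \<zeta> - 2 * (\<tau> * \<beta>) * inner \<zeta> (B *v \<eta>) + (\<tau> * \<beta>)^2 * inner (B *v \<eta>) (B *v \<eta>)"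
    unfolding power2_norm_eq_inner by (simp add: inner_diff_left inner_diff_right inner_commute power2_eq_square algebra_simps)
  have n: "(norm (B *v \<eta>))^2 = inner (B *v \<eta>) (B *v \<eta>)" by (simp add: power2_norm_eq_inner)
  have c: "inner (B *v \<eta>) \<zeta> = inner \<zeta> (B *v \<eta>)" by (simp add: inner_commute)
  show ?thesis unfolding Mop_bilin qnorm2_def e n c
    using quad_real[OF assms, of "inner (B *v \<eta>) (B *v \<eta>)" "inner \<zeta> (B *v \<eta>)" "inner \<zeta> \<zeta>"]
    by (simp add: algebra_simps)
qed

lemma Mop_sym:
  assumes "sym_mat G" "sym_mat H"
  shows "inner (M_op G H B \<beta> \<tau> \<theta> z) z' = inner z (M_op G H B \<beta> \<tau> \<theta> z')"
proof -
  obtain a b c where z: "z = (a, b, c)" by (cases z) auto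
  obtain a' b' c' where z': "z' = (a', b', c')" by (cases z') auto
  have "inner z (M_op G H B \<beta> \<tau> \<theta> z') = inner (M_op G H B \<beta> \<tau> \<theta> z') z" by (simp add: inner_commute)
  then show ?thesis unfolding z z' Mop_bilin
    using sym_inner[OF assms(1), of a a'] sym_inner[OF assms(2), of b b']
    by (simp add: inner_commute algebra_simps)
qed

lemma Mop_linear:
  fixes G :: "real^'n^'n" and H :: "real^'p^'p" and B :: "real^'p^'m"
  shows "linear (M_op G H B \<beta> \<tau> \<theta>)"
proof (rule linearI)
  fix z z' :: "(real^'n) \<times> (real^'p) \<times> (real^'m)"
  obtain a b c where z: "z = (a, b, c)" by (cases z) auto
  obtain a' b' c' where z': "z' = (a', b', c')" by (cases z') auto
  show "M_op G H B \<beta> \<tau> \<theta> (z + z') = M_op G H B \<beta> \<tau> \<theta> z + M_op G H B \<beta> \<tau> \<theta> z'"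
    unfolding z z' M_op_def by (simp add: matrix_vector_right_distrib algebra_simps del: transpose_matrix_vector)
next
  fix r :: real and z :: "(real^'n) \<times> (real^'p) \<times> (real^'m)"
  obtain a b c where z: "z = (a, b, c)" by (cases z) auto
  show "M_op G H B \<beta> \<tau> \<theta> (r *\<^sub>R z) = r *\<^sub>R M_op G H B \<beta> \<tau> \<theta> z"
    unfolding z M_op_def by (simp add: matrix_vector_mult_scaleR algebra_simps del: transpose_matrix_vector)
qed

lemma Mop_psd:
  assumes "pos_def G" "pos_semidef H" "\<tau> < 1" "\<tau> + \<theta> > 0" "\<beta> > 0"
  shows "0 \<le> inner (M_op G H B \<beta> \<tau> \<theta> z) z"
proof -
  obtain a b c where z: "z = (a, b, c)" by (cases z) auto
  have "0 \<le> qnorm2 G a" using assms(1) unfolding pos_def_def qnorm2_def by (cases "a = 0") (auto intro: less_imp_le)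
  moreover have "0 \<le> qnorm2 H b" using assms(2) unfolding pos_semidef_def qnorm2_def by auto
  ultimately show ?thesis unfolding z using assms
    by (subst Mop_quad) (auto intro!: add_nonneg_nonneg divide_nonneg_pos mult_nonneg_nonneg)
qed



lemma vartheta_pos:
  assumes "region_R st \<tau> \<theta>" "0 \<le> st"
  shows "vartheta st \<tau> \<theta> > 0"
proof -
  have r: "-1 < \<tau>" "\<tau> < 1 - st" "\<tau> + \<theta> > 0"
     "(1 - \<tau>^2) * (2 - \<tau> - \<theta> - st) - (1 - \<theta>)^2 * (1 - \<tau> - st) > 0"
    using assms(1) unfolding region_R_def by auto
  define u where "u = 1 - \<tau>"
  define a where "a = 1 - \<tau> - st"
  define e where "e = \<theta> - 1"
  have u: "0 < u" "u < 2" "a > 0" "a \<le> u" using r assms(2) unfolding u_def a_def by auto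
  have t2: "1 - \<tau>^2 = u * (2 - u)" unfolding u_def by (simp add: power2_eq_square algebra_simps)
  have reg: "u * (2 - u) * (a - e) > e^2 * a" using r(4) unfolding t2 unfolding u_def a_def e_def
    by (simp add: power2_eq_square algebra_simps)
  have bpos: "a - e > 0"
  proof -
    have "e^2 * a \<ge> 0" using u by simp
    hence "u * (2 - u) * (a - e) > 0" using reg by linarith
    moreover have "u * (2 - u) > 0" using u by simp
    ultimately show ?thesis by (simp add: zero_less_mult_iff)
  qed
  have P: "(3 - 3 * \<tau> - 2* st) * (4 - \<tau> - \<theta> - 2* st) - (2 * (1 - \<tau> - st))^2
       = 4*a + u*(2-u) - e*(2*a+u)"
    unfolding u_def a_def e_def by (simp add: power2_eq_square algebra_simps)
  have Ppos: "4*a + u*(2-u) - e*(2*a+u) > 0"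
  proof (cases "e \<le> 2 - u")
    case True
    have "e*(2*a+u) \<le> (2-u)*(2*a+u)" using True u by (intro mult_right_mono) auto
    moreover have "(2-u)*(2*a+u) < 4*a + u*(2-u)" using u by (simp add: algebra_simps)
    ultimately show ?thesis by linarith
  next
    case False
    hence e1: "e > 2 - u" by simp
    hence epos: "e > 0" using u by simp
    have "e^2 * a > (2 - u) * e * a" using e1 epos u by (simp add: power2_eq_square)
    hence "(2 - u) * (u * (a - e)) > (2 - u) * (e * a)" using reg by (simp add: algebra_simps)
    hence k: "u * (a - e) > e * a" using u by (simp add: mult_less_cancel_left)
    have "e*u > 0" using epos u by simp
    have x1: "e*(2*a+u) = 2*(a*e + e*u) - e*u" by (simp add: algebra_simps)
    have x2: "u * (a - e) = u*a - e*u" by (simp add: algebra_simps)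
    have "e*(2*a+u) < 2*u*a" using k \<open>e*u > 0\<close> unfolding x1 x2 by (simp add: mult.commute)
    moreover have "2*u*a \<le> 4*a + u*(2-u)"
    proof -
      have "0 \<le> (2-u)*(2*a+u)" using u by simp
      moreover have "(2-u)*(2*a+u) = 4*a + u*(2-u) - 2*u*a" by (simp add: algebra_simps)
      ultimately show ?thesis by linarith
    qed
    ultimately show ?thesis by linarith
  qed
  have "sqrt ((2 * (1 - \<tau> - st))^2) < sqrt ((3 - 3 * \<tau> - 2* st) * (4 - \<tau> - \<theta> - 2* st))"
    using P Ppos by (intro real_sqrt_less_mono) linarith
  moreover have "sqrt ((2 * (1 - \<tau> - st))^2) = 2 * (1 - \<tau> - st)" using r by simp
  ultimately show ?thesis unfolding vartheta_def by simp
qed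

lemma err_identity:
  fixes \<beta> s \<tau> \<theta> st \<sigma> PP PQ QQ :: real
  assumes "\<beta> > 0" "s > 0" "s = \<tau> + \<theta>"
  shows "\<sigma> * (\<beta> * (1 - \<tau>) * PP + \<beta>^2 * ((1-\<tau>)^2*PP + 2*(1-\<tau>)*PQ + QQ) / (s*\<beta>))
         - st * \<beta> * (PP + 2*PQ + QQ)
         - \<beta>^2 * ((1-\<tau>)^2*PP - 2*(1-\<tau>)*(s-1)*PQ + (s-1)^2*QQ) / (s*\<beta>)
       = (\<beta> / s) * (phi_hat st \<tau> \<theta> \<sigma> * PP + 2 * phi st \<tau> \<theta> \<sigma> * PQ + phi_tilde st \<tau> \<theta> \<sigma> * QQ)"
proof -
  have th: "\<theta> = s - \<tau>" using assms by simp
  show ?thesis unfolding phi_hat_def phi_def phi_tilde_def th using assms(1,2)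
    by (simp add: field_simps power2_eq_square)
qed

lemma err_real:
  fixes \<beta> s \<tau> \<theta> st sh \<sigma> PP PQ QQ GE GA HH :: real
  assumes "\<beta> > 0" "s > 0" "s = \<tau> + \<theta>"
    and "GE \<le> st * \<beta> * (PP + 2*PQ + QQ) + sh * GA" "0 \<le> GA" "sh \<le> \<sigma>"
  shows "GE + \<beta>^2 * ((1-\<tau>)^2*PP - 2*(1-\<tau>)*(s-1)*PQ + (s-1)^2*QQ) / (s*\<beta>)
     \<le> \<sigma> * (GA + HH + \<beta> * (1 - \<tau>) * PP + \<beta>^2 * ((1-\<tau>)^2*PP + 2*(1-\<tau>)*PQ + QQ) / (s*\<beta>))
        - (\<beta> / s) * (phi_hat st \<tau> \<theta> \<sigma> * PP + 2 * phi st \<tau> \<theta> \<sigma> * PQ + phi_tilde st \<tau> \<theta> \<sigma> * QQ)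
        - \<sigma> * HH"
proof -
  have "sh * GA \<le> \<sigma> * GA" using assms(5,6) by (simp add: mult_right_mono)
  thus ?thesis using err_identity[OF assms(1-3), of \<sigma> PP PQ QQ st] assms(4)
    by (simp add: algebra_simps)
qed

lemma step_ge2_real:
  fixes \<beta> s \<tau> \<theta> \<sigma> \<phi> \<phi>h \<phi>t PP PQ QQ QP' QQ' HH HH' HX :: real
  assumes \<beta>: "\<beta> > 0" and s: "s > 0" and \<tau>: "w > 0" and \<phi>: "\<phi> \<ge> 0" and \<phi>t: "\<phi>t > 0"
    and \<phi>b: "(w * \<phi>h - 2 * \<tau> * \<phi>) * w * \<phi>t - (1 - \<theta>)^2 * \<phi>^2 \<ge> 0"
    and mono: "w*\<beta>*PQ + \<tau>*\<beta>*PP - (1-\<theta>)*\<beta>*QP' - HH + HX \<ge> 0"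
    and hx: "2*HX \<le> HH + HH'"
    and sos: "0 \<le> ((1-\<theta>)*\<phi>/w)^2*PP + 2*((1-\<theta>)*\<phi>/w)*\<phi>t*QP' + \<phi>t^2*QQ'"
    and PP: "PP \<ge> 0" and \<sigma>: "\<sigma> \<ge> 0" and HH: "HH \<ge> 0"
  shows "0 \<le> (\<beta>/s)*(\<phi>h*PP + 2*\<phi>*PQ + \<phi>t*QQ) + \<sigma>*HH
              + ((\<beta>/s)*\<phi>t*QQ' + \<phi>/(s*w)*HH') - ((\<beta>/s)*\<phi>t*QQ + \<phi>/(s*w)*HH)"
proof -
  define b where "b = (1-\<theta>)*\<phi>/w"
  define \<alpha> where "\<alpha> = \<phi>h - 2*\<tau>*\<phi>/w"
  have t1: "w > 0" using \<tau> by simp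
  have m0: "w*PQ \<ge> (1-\<theta>)*QP' - \<tau>*PP + (HH - HX)/\<beta>"
  proof -
    have eq: "\<beta> * ((1-\<theta>)*QP' - \<tau>*PP + (HH - HX)/\<beta>) = (1-\<theta>)*\<beta>*QP' - \<tau>*\<beta>*PP + HH - HX"
      using \<beta> by (simp add: field_simps)
    have "\<beta> * (w*PQ) \<ge> \<beta> * ((1-\<theta>)*QP' - \<tau>*PP + (HH - HX)/\<beta>)"
      unfolding eq using mono by (simp add: algebra_simps)
    thus ?thesis using \<beta> by simp
  qed
  have m1: "2*\<phi>*PQ \<ge> (2*\<phi>/w) * ((1-\<theta>)*QP' - \<tau>*PP + (HH - HX)/\<beta>)"
  proof -
    have "(2*\<phi>/w) * ((1-\<theta>)*QP' - \<tau>*PP + (HH - HX)/\<beta>) \<le> (2*\<phi>/w) * (w*PQ)"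
      using m0 \<phi> t1 by (intro mult_left_mono) auto
    also have "\<dots> = 2*\<phi>*PQ" using t1 by simp
    finally show ?thesis .
  qed
  have ab: "\<alpha>*\<phi>t - b^2 \<ge> 0"
  proof -
    have "w^2 * (\<alpha>*\<phi>t - b^2) = (w * \<phi>h - 2 * \<tau> * \<phi>) * w * \<phi>t - (1 - \<theta>)^2 * \<phi>^2"
      unfolding \<alpha>_def b_def using t1 by (simp add: field_simps power2_eq_square)
    hence "w^2 * (\<alpha>*\<phi>t - b^2) \<ge> 0" using \<phi>b by simp
    thus ?thesis using t1 by (simp add: zero_le_mult_iff)
  qed
  have q1: "\<phi>t * (\<alpha>*PP + 2*b*QP' + \<phi>t*QQ') \<ge> 0"
  proof -
    have "\<phi>t * (\<alpha>*PP + 2*b*QP' + \<phi>t*QQ') = (b^2*PP + 2*b*\<phi>t*QP' + \<phi>t^2*QQ') + (\<alpha>*\<phi>t - b^2)*PP"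
      by (simp add: algebra_simps power2_eq_square)
    moreover have "(\<alpha>*\<phi>t - b^2)*PP \<ge> 0" using ab PP by simp
    ultimately show ?thesis using sos unfolding b_def by linarith
  qed
  hence q2: "\<alpha>*PP + 2*b*QP' \<ge> - \<phi>t*QQ'" using \<phi>t by (simp add: zero_le_mult_iff)
  have e1: "\<phi>h*PP + (2*\<phi>/w) * ((1-\<theta>)*QP' - \<tau>*PP + (HH - HX)/\<beta>)
       = \<alpha>*PP + 2*b*QP' + (2*\<phi>/(w*\<beta>))*(HH - HX)"
    unfolding \<alpha>_def b_def using t1 \<beta> by (simp add: field_simps)
  have h1: "(2*\<phi>/(w*\<beta>))*(HH - HX) \<ge> (\<phi>/(w*\<beta>))*(HH - HH')"
  proof -
    have "(\<phi>/(w*\<beta>))*(HH - HH') \<le> (\<phi>/(w*\<beta>))*(2*(HH - HX))"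
      using hx \<phi> t1 \<beta> by (intro mult_left_mono) auto
    moreover have "(2*\<phi>/(w*\<beta>))*(HH - HX) = (\<phi>/(w*\<beta>))*(2*(HH - HX))" by simp
    ultimately show ?thesis by metis
  qed
  have main: "\<phi>h*PP + 2*\<phi>*PQ \<ge> - \<phi>t*QQ' + (\<phi>/(w*\<beta>))*(HH - HH')"
    using m1 e1 q2 h1 by linarith
  have "(\<beta>/s)*(\<phi>h*PP + 2*\<phi>*PQ + \<phi>t*QQ) \<ge> (\<beta>/s)*(- \<phi>t*QQ' + (\<phi>/(w*\<beta>))*(HH - HH') + \<phi>t*QQ)"
    using main \<beta> s by (intro mult_left_mono) auto
  also have "(\<beta>/s)*(- \<phi>t*QQ' + (\<phi>/(w*\<beta>))*(HH - HH') + \<phi>t*QQ)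
     = ((\<beta>/s)*\<phi>t*QQ + \<phi>/(s*w)*HH) - ((\<beta>/s)*\<phi>t*QQ' + \<phi>/(s*w)*HH')"
    using \<beta> s t1 by (simp add: field_simps)
  finally show ?thesis using \<sigma> HH by (smt (verit) mult_nonneg_nonneg)
qed

lemma amgm_cs:
  fixes X Y c PP PQ QQ :: real
  assumes "X > 0" "Y > 0" "0 \<le> c" "c \<le> sqrt (X*Y)" "PP \<ge> 0" "QQ \<ge> 0" "PQ^2 \<le> PP*QQ"
  shows "0 \<le> X*PP + 2*c*PQ + Y*QQ"
proof -
  have "0 \<le> (sqrt (X*PP) - sqrt (Y*QQ))^2" by simp
  also have "\<dots> = X*PP + Y*QQ - 2* sqrt (X*Y)* sqrt (PP*QQ)"
    using assms by (simp add: power2_diff real_sqrt_mult algebra_simps)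
  finally have a: "2* sqrt (X*Y)* sqrt (PP*QQ) \<le> X*PP + Y*QQ" by simp
  have "\<bar>PQ\<bar> \<le> sqrt (PP*QQ)" using real_le_rsqrt[of "\<bar>PQ\<bar>" "PP*QQ"] assms(7) by simp
  hence "c*\<bar>PQ\<bar> \<le> sqrt (X*Y)* sqrt (PP*QQ)" using assms(1-4) by (intro mult_mono) auto
  moreover have "- PQ \<le> \<bar>PQ\<bar>" by simp
  hence "c*(-PQ) \<le> c*\<bar>PQ\<bar>" using assms(3) by (rule mult_left_mono)
  ultimately show ?thesis using a by simp
qed

lemma step1_real:
  fixes \<beta> \<tau> \<theta> st s vth w PP PQ QQ HH d d1 N0 N1 :: real
  assumes \<beta>: "\<beta> > 0" and w: "w = 1 + \<tau>" "w > 0" and a: "1 - \<tau> - st > 0" and st: "st \<ge> 0"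
    and vt: "vth > 0" "vth = sqrt ((3 - 3 * \<tau> - 2* st) * (4 - \<tau> - \<theta> - 2* st)) - 2 * (1 - \<tau> - st)"
    and s: "s = \<tau> + \<theta>"
    and h1: "d1 + HH + \<beta>*(1-\<tau>-st)*(PP + 2*PQ + QQ) + \<beta>*(1-\<theta>)*QQ \<le> d"
    and N: "N0 \<le> d" "N1 \<le> d1" "\<beta>*((1-\<tau>)*PP + s*QQ)/2 \<le> N0 + N1"
    and HH: "HH \<ge> 0" and PP: "PP \<ge> 0" and QQ: "QQ \<ge> 0" and CS: "PQ^2 \<le> PP*QQ"
  shows "-2*\<beta>*w*PQ + HH \<le> (4*(w+vth)/vth) * d"
proof -
  define a where "a = 1 - \<tau> - st"
  define X where "X = 3 - 3 * \<tau> - 2* st"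
  define Y where "Y = 4 - \<tau> - \<theta> - 2* st"
  define \<kappa> where "\<kappa> = 4*(w+vth)/vth"
  have apos: "a > 0" using a a_def by simp
  have Xpos: "X > 0" unfolding X_def using a st by simp
  have sq: "sqrt (X*Y) = vth + 2*a" using vt unfolding X_def Y_def a_def by simp
  hence "sqrt (X*Y) > 0" using vt apos by simp
  hence XY: "X*Y > 0" by (metis real_sqrt_le_0_iff not_le)
  hence Ypos: "Y > 0" using Xpos by (simp add: zero_less_mult_iff)
  have k4: "\<kappa> \<ge> 4" unfolding \<kappa>_def using vt w by (simp add: field_simps)
  define c where "c = 2*a + 4*w/\<kappa>"
  have c0: "c \<ge> 0" unfolding c_def using apos w k4 by simp
  have "4*w/\<kappa> = w* vth/(w+vth)" unfolding \<kappa>_def using vt w by (simp add: field_simps)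
  also have "\<dots> \<le> vth" using vt w by (simp add: field_simps)
  finally have c1: "c \<le> sqrt (X*Y)" unfolding c_def sq by simp
  have Q: "0 \<le> X*PP + 2*c*PQ + Y*QQ" by (rule amgm_cs[OF Xpos Ypos c0 c1 PP QQ CS])
  define T where "T = \<beta>*a*(PP + 2*PQ + QQ) + \<beta>*(1-\<theta>)*QQ"
  define W where "W = \<beta>*((1-\<tau>)*PP + s*QQ)/2"
  define k where "k = \<kappa>/2"
  have k2: "k \<ge> 2" unfolding k_def using k4 by simp
  have i1: "k * N0 \<le> k * d" using N(1) k2 by (intro mult_left_mono) auto
  have i2: "k * (d1 + HH + T) \<le> k * d"
    using h1 k2 unfolding a_def T_def by (intro mult_left_mono) (auto simp: algebra_simps)
  have i3: "k * N1 \<le> k * d1" using N(2) k2 by (intro mult_left_mono) auto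
  have i4: "k * W \<le> k * (N0 + N1)" using N(3) k2 unfolding W_def by (intro mult_left_mono) auto
  have i5: "1 * HH \<le> k * HH" using HH k2 by (intro mult_right_mono) auto
  have i6: "0 \<le> (\<kappa>/4) * \<beta> * (X*PP + 2*c*PQ + Y*QQ)" using Q k4 \<beta> by simp
  have iden: "(\<kappa>/4) * \<beta> * (X*PP + 2*c*PQ + Y*QQ) = k * W + k * T + 2*\<beta>*w*PQ"
  proof -
    have kw: "\<kappa> * (4*w/\<kappa>) = 4*w" using k4 by simp
    have "(\<kappa>/4) * \<beta> * (2*c*PQ) = (\<kappa>/4) * \<beta> * (4*a*PQ) + \<beta>*PQ*2*(\<kappa> * (4*w/\<kappa>))/4"
      unfolding c_def by (simp add: algebra_simps)
    also have "\<dots> = (\<kappa>/4) * \<beta> * (4*a*PQ) + 2*\<beta>*w*PQ" unfolding kw by simp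
    finally have "(\<kappa>/4) * \<beta> * (2*c*PQ) = (\<kappa>/4) * \<beta> * (4*a*PQ) + 2*\<beta>*w*PQ" .
    moreover have "(\<kappa>/4) * \<beta> * (X*PP + 2*c*PQ + Y*QQ) = (\<kappa>/4) * \<beta> * (X*PP + Y*QQ) + (\<kappa>/4) * \<beta> * (2*c*PQ)"
      by (simp add: algebra_simps)
    moreover have "(\<kappa>/4) * \<beta> * (X*PP + Y*QQ) + (\<kappa>/4) * \<beta> * (4*a*PQ) = k * W + k * T"
      unfolding X_def Y_def a_def s k_def W_def T_def by (simp add: field_simps)
    ultimately show ?thesis by linarith
  qed
  have "k * (d1 + HH + T) = k * d1 + k * HH + k * T" "k * (N0 + N1) = k * N0 + k * N1"
    by (simp_all add: algebra_simps)
  hence "-2*\<beta>*w*PQ + HH \<le> k * d + k * d" using i1 i2 i3 i4 i5 i6 iden by linarith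
  hence "-2*\<beta>*w*PQ + HH \<le> \<kappa> * d" unfolding k_def by simp
  thus ?thesis unfolding \<kappa>_def .
qed



lemma posdef_Ginv:
  fixes G :: "real^'n^'n"
  assumes "pos_def G"
  shows "G *v (matrix_inv G *v u) = u"
proof -
  have ker: "z = 0" if "G *v z = 0" for z
  proof (rule ccontr)
    assume "z \<noteq> 0"
    hence "inner (G *v z) z > 0" using assms unfolding pos_def_def by blast
    thus False using that by simp
  qed
  have "inj ((*v) G)"
  proof (rule injI)
    fix a b assume "G *v a = G *v b"
    hence "G *v (a - b) = 0" by (simp add: matrix_vector_mult_diff_distrib)
    hence "a - b = 0" by (rule ker)
    thus "a = b" by simp
  qed
  hence "\<exists>B. B ** G = mat 1" using matrix_left_invertible_injective by blast
  hence "invertible G" using invertible_left_inverse by blast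
  hence "\<exists>A'. G ** A' = mat 1 \<and> A' ** G = mat 1" unfolding invertible_def .
  hence "G ** matrix_inv G = mat 1 \<and> matrix_inv G ** G = mat 1"
    unfolding matrix_inv_def by (rule someI_ex)
  hence "G ** matrix_inv G = mat 1" by blast
  thus ?thesis by (simp add: matrix_vector_mul_assoc)
qed

lemma norm2_lin:
  fixes p q :: "'a::real_inner"
  shows "(norm (c1 *\<^sub>R p + c2 *\<^sub>R q))^2 = c1^2 * inner p p + 2*c1*c2 * inner p q + c2^2 * inner q q"
  unfolding power2_norm_eq_inner
  by (simp add: inner_add_left inner_add_right inner_commute[of q p] power2_eq_square algebra_simps)

lemma half_par:
  fixes x y :: "'a::real_inner"
  shows "(norm y)^2 / 2 \<le> (norm x)^2 + (norm (x + y))^2"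
proof -
  have "(norm x)^2 + (norm (x + y))^2 = (norm y)^2 / 2 + (norm (2 *\<^sub>R x + y))^2 / 2"
    unfolding power2_norm_eq_inner
    by (simp add: inner_add_left inner_add_right inner_commute[of y x] field_simps)
  thus ?thesis by simp
qed

lemma Mq_add:
  fixes M :: "'a::real_inner \<Rightarrow> 'a"
  assumes lin: "linear M" and sym: "\<And>x y. inner (M x) y = inner x (M y)"
  shows "inner (M (a + b)) (a + b) = inner (M a) a + 2 * inner (M a) b + inner (M b) b"
proof -
  have "inner (M b) a = inner (M a) b" by (metis sym inner_commute)
  thus ?thesis using lin by (simp add: linear_add inner_add_left inner_add_right)
qed

lemma hpe_id:
  fixes M :: "'a::real_inner \<Rightarrow> 'a"
  assumes lin: "linear M" and sym: "\<And>x y. inner (M x) y = inner x (M y)"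
  shows "inner (M (c - z1)) (c - z1) = inner (M (c - z0)) (c - z0) + inner (M (zt - z1)) (zt - z1)
     - inner (M (zt - z0)) (zt - z0) - 2 * inner (M (z0 - z1)) (zt - c)"
proof -
  define a where "a = c - zt"
  define e1 where "e1 = zt - z1"
  define e0 where "e0 = zt - z0"
  have 1: "c - z1 = a + e1" "c - z0 = a + e0" "z0 - z1 = e1 - e0" "zt - c = - a"
    unfolding a_def e1_def e0_def by (simp_all add: algebra_simps)
  have "inner (M (e1 - e0)) (- a) = - inner (M a) e1 + inner (M a) e0"
  proof -
    have "inner (M (e1 - e0)) (- a) = - inner (M e1) a + inner (M e0) a" using lin by (simp add: linear_diff inner_diff_left)
    also have "inner (M e1) a = inner (M a) e1" by (metis sym inner_commute)
    also have "inner (M e0) a = inner (M a) e0" by (metis sym inner_commute)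
    finally show ?thesis .
  qed
  thus ?thesis unfolding 1 e1_def[symmetric] e0_def[symmetric] Mq_add[OF lin sym] by simp
qed

lemma par_ineq:
  fixes M :: "'a::real_inner \<Rightarrow> 'a"
  assumes lin: "linear M" and sym: "\<And>x y. inner (M x) y = inner x (M y)"
    and psd: "\<And>x. 0 \<le> inner (M x) x"
  shows "inner (M (e1 - e0)) (e1 - e0) \<le> 2 * inner (M e1) e1 + 2 * inner (M e0) e0"
proof -
  have a: "inner (M (e1 + e0)) (e1 + e0) = inner (M e1) e1 + 2 * inner (M e1) e0 + inner (M e0) e0"
    by (rule Mq_add[OF lin sym])
  have b: "inner (M (e1 + (- e0))) (e1 + (- e0)) = inner (M e1) e1 + 2 * inner (M e1) (- e0) + inner (M (- e0)) (- e0)"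
    by (rule Mq_add[OF lin sym])
  have c: "inner (M (- e0)) (- e0) = inner (M e0) e0" using lin by (simp add: linear_neg)
  have "0 \<le> inner (M (e1 + e0)) (e1 + e0)" by (rule psd)
  thus ?thesis using a b c by simp
qed


lemma step1_combine:
  fixes \<beta> s w \<phi> \<phi>h \<phi>t \<sigma> vth PP PQ QQ HH E D d :: real
  assumes s: "s > 0" and w: "w > 0" and \<phi>: "\<phi> \<ge> 0" and \<phi>h: "\<phi>h \<ge> 0" and PP: "PP \<ge> 0"
    and \<sigma>: "\<sigma> \<ge> 0" and HH: "HH \<ge> 0" and \<beta>: "\<beta> > 0" and vt: "vth > 0"
    and errR: "E \<le> \<sigma>*D - (\<beta>/s)*(\<phi>h*PP + 2*\<phi>*PQ + \<phi>t*QQ) - \<sigma>*HH"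
    and star: "-2*\<beta>*w*PQ + HH \<le> (4*(w+vth)/vth) * d"
  shows "E \<le> \<sigma>*D + (4*(w+vth)*\<phi>/(s*w* vth))*d - ((\<beta>/s)*\<phi>t*QQ + \<phi>/(s*w)*HH)"
proof -
  have "(\<phi>/(s*w)) * (-2*\<beta>*w*PQ + HH) \<le> (\<phi>/(s*w)) * ((4*(w+vth)/vth) * d)"
    using star \<phi> s w by (intro mult_left_mono) auto
  moreover have "(\<phi>/(s*w)) * (-2*\<beta>*w*PQ + HH) = - (\<beta>/s)*(2*\<phi>*PQ) + \<phi>/(s*w)*HH"
    using s w by (simp add: field_simps)
  moreover have "(\<phi>/(s*w)) * ((4*(w+vth)/vth) * d) = (4*(w+vth)*\<phi>/(s*w* vth))*d"
    using s w vt by (simp add: field_simps)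
  moreover have "(\<beta>/s)*(\<phi>h*PP) \<ge> 0" using \<beta> s \<phi>h PP by simp
  moreover have "\<sigma>*HH \<ge> 0" using \<sigma> HH by simp
  moreover have "(\<beta>/s)*(\<phi>h*PP + 2*\<phi>*PQ + \<phi>t*QQ) = (\<beta>/s)*(\<phi>h*PP) + (\<beta>/s)*(2*\<phi>*PQ) + (\<beta>/s)*\<phi>t*QQ"
    by (simp add: algebra_simps)
  ultimately show ?thesis using errR by linarith
qed




lemma yquad:
  fixes B :: "real^'p^'m" and H :: "real^'p^'p"
  assumes Hs: "sym_mat H"
  shows "- inner gh (B *v (y + t *\<^sub>R e)) + \<beta> / 2 * (norm (a + B *v (y + t *\<^sub>R e) - b))\<^sup>2 + 1 / 2 * qnorm2 H ((y + t *\<^sub>R e) - y0)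
    = (- inner gh (B *v y) + \<beta> / 2 * (norm (a + B *v y - b))\<^sup>2 + 1 / 2 * qnorm2 H (y - y0))
      + t * inner (- (transpose B *v gh) + \<beta> *\<^sub>R (transpose B *v (a + B *v y - b)) + H *v (y - y0)) e
      + t^2 * (\<beta> / 2 * (norm (B *v e))^2 + 1/2 * qnorm2 H e)"
proof -
  define r where "r = a + B *v y - b"
  have 1: "a + B *v (y + t *\<^sub>R e) - b = r + t *\<^sub>R (B *v e)"
    unfolding r_def by (simp add: matrix_vector_right_distrib matrix_vector_mult_scaleR algebra_simps)
  have 2: "(y + t *\<^sub>R e) - y0 = (y - y0) + t *\<^sub>R e" by (simp add: algebra_simps)
  have 3: "qnorm2 H ((y - y0) + t *\<^sub>R e) = qnorm2 H (y - y0) + 2 * t * inner (H *v (y - y0)) e + t^2 * qnorm2 H e"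
  proof -
    have "inner (H *v e) (y - y0) = inner (H *v (y - y0)) e"
      using sym_inner[OF Hs, of e "y - y0"] by (simp add: inner_commute)
    thus ?thesis unfolding qnorm2_def
      by (simp add: matrix_vector_right_distrib matrix_vector_mult_scaleR inner_add_left inner_add_right power2_eq_square algebra_simps)
        (metis distrib_left)
  qed
  have 4: "(norm (r + t *\<^sub>R (B *v e)))^2 = (norm r)^2 + 2 * t * inner r (B *v e) + t^2 * (norm (B *v e))^2"
    unfolding power2_norm_eq_inner by (simp add: inner_add_left inner_add_right inner_commute power2_eq_square algebra_simps)
  have 5: "inner gh (B *v (y + t *\<^sub>R e)) = inner gh (B *v y) + t * inner (transpose B *v gh) e"
    by (simp add: matrix_vector_right_distrib matrix_vector_mult_scaleR inner_add_right adj del: transpose_matrix_vector)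
  have 6: "inner (- (transpose B *v gh) + \<beta> *\<^sub>R (transpose B *v r) + H *v (y - y0)) e
      = - inner (transpose B *v gh) e + \<beta> * inner r (B *v e) + inner (H *v (y - y0)) e"
    by (simp only: inner_add_left inner_minus_left inner_scaleR_left adj)
  show ?thesis unfolding 1 2 3 4 5 r_def[symmetric] 6 by (simp add: algebra_simps)
qed


declare transpose_matrix_vector [simp del]

theorem theorem2p10:
  fixes f :: "real^'n \<Rightarrow> ereal" and g :: "real^'p \<Rightarrow> ereal"
    and A :: "real^'n^'m" and B :: "real^'p^'m" and b :: "real^'m"
    and G :: "real^'n^'n" and H :: "real^'p^'p"
    and \<beta> st sh \<tau> \<theta> \<sigma> :: real
    and x :: "nat \<Rightarrow> real^'n" and y :: "nat \<Rightarrow> real^'p" and \<gamma> :: "nat \<Rightarrow> real^'m"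
    and xt :: "nat \<Rightarrow> real^'n" and u :: "nat \<Rightarrow> real^'n" and \<gamma>t :: "nat \<Rightarrow> real^'m"
    and \<gamma>h :: "nat \<Rightarrow> real^'m"
    and v :: "nat \<Rightarrow> real^'p" and w :: "nat \<Rightarrow> real^'m"
  assumes f_pcc: "proper_fun f" "convex_fun f" "closed_fun f"
    and g_pcc: "proper_fun g" "convex_fun g" "closed_fun g"
    and kkt_ne: "kkt_set f g A B b \<noteq> {}"
    and \<beta>_pos: "\<beta> > 0"
    and st: "0 \<le> st" "st < 1" and sh: "0 \<le> sh" "sh < 1"
    and G_pd: "pos_def G" and H_psd: "pos_semidef H"
    and region: "region_R st \<tau> \<theta>"
    and step_gt: "\<And>k. k \<ge> 1 \<Longrightarrow> \<gamma>t k = \<gamma> (k - 1) - \<beta> *\<^sub>R (A *v xt k + B *v y (k - 1) - b)"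
    and step_u: "\<And>k. k \<ge> 1 \<Longrightarrow> u k \<in> {s - transpose A *v \<gamma>t k | s. s \<in> subdiff f (xt k)}"
    and step_inexact: "\<And>k. k \<ge> 1 \<Longrightarrow>
        qnorm2 G (xt k - x (k - 1) + matrix_inv G *v u k)
          \<le> st / \<beta> * (norm (\<gamma>t k - \<gamma> (k - 1)))\<^sup>2 + sh * qnorm2 G (xt k - x (k - 1))"
    and step_gh: "\<And>k. k \<ge> 1 \<Longrightarrow> \<gamma>h k = \<gamma> (k - 1) - (\<tau> * \<beta>) *\<^sub>R (A *v xt k + B *v y (k - 1) - b)"
    and step_y: "\<And>k y'. k \<ge> 1 \<Longrightarrow>
        g (y k) + ereal (- inner (\<gamma>h k) (B *v y k) + \<beta> / 2 * (norm (A *v xt k + B *v y k - b))\<^sup>2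
                         + 1 / 2 * qnorm2 H (y k - y (k - 1)))
        \<le> g y' + ereal (- inner (\<gamma>h k) (B *v y') + \<beta> / 2 * (norm (A *v xt k + B *v y' - b))\<^sup>2
                         + 1 / 2 * qnorm2 H (y' - y (k - 1)))"
    and step_x: "\<And>k. k \<ge> 1 \<Longrightarrow> x k = x (k - 1) - matrix_inv G *v u k"
    and step_g: "\<And>k. k \<ge> 1 \<Longrightarrow> \<gamma> k = \<gamma>h k - (\<theta> * \<beta>) *\<^sub>R (A *v xt k + B *v y k - b)"
    and v_def: "\<And>k. k \<ge> 1 \<Longrightarrow> v k =
        (H + ((\<tau> - \<tau> * \<theta> + \<theta>) * \<beta> / (\<tau> + \<theta>)) *\<^sub>R (transpose B ** B)) *v (y (k - 1) - y k)
        - (\<tau> / (\<tau> + \<theta>)) *\<^sub>R (transpose B *v (\<gamma> (k - 1) - \<gamma> k))"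
    and w_def: "\<And>k. k \<ge> 1 \<Longrightarrow> w k =
        - (\<tau> / (\<tau> + \<theta>)) *\<^sub>R (B *v (y (k - 1) - y k)) + (1 / ((\<tau> + \<theta>) * \<beta>)) *\<^sub>R (\<gamma> (k - 1) - \<gamma> k)"
    and \<sigma>_range: "sh \<le> \<sigma>" "\<sigma> < 1"
    and \<sigma>_phi: "phi st \<tau> \<theta> \<sigma> \<ge> 0" "phi_hat st \<tau> \<theta> \<sigma> \<ge> 0"
        "phi_tilde st \<tau> \<theta> \<sigma> > 0" "phi_bar st \<tau> \<theta> \<sigma> \<ge> 0"
  shows "\<forall>k\<ge>1.
      u k \<in> {s - transpose A *v \<gamma>t k | s. s \<in> subdiff f (xt k)} \<and>
      v k \<in> {s - transpose B *v \<gamma>t k | s. s \<in> subdiff g (y k)} \<and>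
      w k = A *v xt k + B *v y k - b \<and>
      (\<exists>i. 1 \<le> i \<and> i \<le> k \<and>
         Max {norm (u i), norm (v i), norm (w i)}
           \<le> sqrt (2 * largest_eigenvalue (M_op G H B \<beta> \<tau> \<theta>)
                    * d0_val f g A B b G H \<beta> \<tau> \<theta> (x 0, y 0, \<gamma> 0)
                    * C1_const st \<tau> \<theta> \<sigma> / real k))"
proof -
  have r: "-1 < \<tau>" "\<tau> < 1 - st" "\<tau> + \<theta> > 0" using region unfolding region_R_def by auto
  define s where "s = \<tau> + \<theta>"
  have s0: "s > 0" using r s_def by simp
  have th_s: "\<theta> = s - \<tau>" unfolding s_def by simp
  have t1: "\<tau> < 1" using r st by simp
  have w0: "1 + \<tau> > 0" using r by simp
  have Gsym: "sym_mat G" using G_pd unfolding pos_def_def by simp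
  have Hsym: "sym_mat H" using H_psd unfolding pos_semidef_def by simp
  have Hpsd: "\<And>z. 0 \<le> qnorm2 H z" using H_psd unfolding pos_semidef_def qnorm2_def by simp
  have Gpsd: "\<And>z. 0 \<le> qnorm2 G z" using G_pd unfolding pos_def_def qnorm2_def
    by (metis inner_zero_right less_eq_real_def)
  define p where "p i = B *v (y (i - 1) - y i)" for i
  define q where "q i = A *v xt i + B *v y i - b" for i
  define dy where "dy i = y (i - 1) - y i" for i
  have r1: "A *v xt i + B *v y (i - 1) - b = p i + q i" for i
    unfolding p_def q_def by (simp add: matrix_vector_mult_diff_distrib algebra_simps)
  have gt: "\<gamma>t i = \<gamma> (i - 1) - \<beta> *\<^sub>R (p i + q i)" if "i \<ge> 1" for i
    using step_gt[OF that] r1 by simp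
  have gh: "\<gamma>h i = \<gamma> (i - 1) - (\<tau> * \<beta>) *\<^sub>R (p i + q i)" if "i \<ge> 1" for i
    using step_gh[OF that] r1 by simp
  have gk: "\<gamma> i = \<gamma> (i - 1) - (\<tau> * \<beta>) *\<^sub>R (p i + q i) - (\<theta> * \<beta>) *\<^sub>R q i" if "i \<ge> 1" for i
    using step_g[OF that] gh[OF that] unfolding q_def by simp
  have gdiff: "\<gamma> (i - 1) - \<gamma> i = (\<tau> * \<beta>) *\<^sub>R p i + (s * \<beta>) *\<^sub>R q i" if "i \<ge> 1" for i
    using gk[OF that] unfolding s_def by (simp add: algebra_simps)
  have wq: "w i = q i" if "i \<ge> 1" for i
  proof -
    have "w i = - (\<tau> / s) *\<^sub>R p i + (1 / (s * \<beta>)) *\<^sub>R ((\<tau> * \<beta>) *\<^sub>R p i + (s * \<beta>) *\<^sub>R q i)"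
      using w_def[OF that] gdiff[OF that] unfolding p_def s_def by simp
    also have "\<dots> = (- (\<tau> / s) + (1 / (s * \<beta>)) * (\<tau> * \<beta>)) *\<^sub>R p i + ((1 / (s * \<beta>)) * (s * \<beta>)) *\<^sub>R q i"
      by (simp add: scaleR_add_right scaleR_add_left)
    also have "(- (\<tau> / s) + (1 / (s * \<beta>)) * (\<tau> * \<beta>)) = 0" using s0 \<beta>_pos by simp
    also have "(1 / (s * \<beta>)) * (s * \<beta>) = 1" using s0 \<beta>_pos by simp
    finally show ?thesis by simp
  qed
  define sg where "sg i = transpose B *v \<gamma>h i - \<beta> *\<^sub>R (transpose B *v q i) + H *v dy i" for i
  have sg_sub: "sg i \<in> subdiff g (y i)" if "i \<ge> 1" for i
  proof -
    have "- (- (transpose B *v \<gamma>h i) + \<beta> *\<^sub>R (transpose B *v (A *v xt i + B *v y i - b)) + H *v (y i - y (i - 1)))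
           \<in> subdiff g (y i)"
    proof (rule opt_subgrad[OF g_pcc(1) g_pcc(2)])
      show "g (y i) + ereal (- inner (\<gamma>h i) (B *v y i) + \<beta> / 2 * (norm (A *v xt i + B *v y i - b))\<^sup>2 + 1 / 2 * qnorm2 H (y i - y (i - 1)))
         \<le> g y' + ereal (- inner (\<gamma>h i) (B *v y') + \<beta> / 2 * (norm (A *v xt i + B *v y' - b))\<^sup>2 + 1 / 2 * qnorm2 H (y' - y (i - 1)))" for y'
        by (rule step_y[OF that])
      show "- inner (\<gamma>h i) (B *v (y i + t *\<^sub>R e)) + \<beta> / 2 * (norm (A *v xt i + B *v (y i + t *\<^sub>R e) - b))\<^sup>2 + 1 / 2 * qnorm2 H ((y i + t *\<^sub>R e) - y (i - 1))
        = (- inner (\<gamma>h i) (B *v y i) + \<beta> / 2 * (norm (A *v xt i + B *v y i - b))\<^sup>2 + 1 / 2 * qnorm2 H (y i - y (i - 1)))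
          + t * inner (- (transpose B *v \<gamma>h i) + \<beta> *\<^sub>R (transpose B *v (A *v xt i + B *v y i - b)) + H *v (y i - y (i - 1))) e
          + t^2 * (\<beta> / 2 * (norm (B *v e))^2 + 1/2 * qnorm2 H e)" for e t
        by (rule yquad[OF Hsym])
    qed
    moreover have "- (- (transpose B *v \<gamma>h i) + \<beta> *\<^sub>R (transpose B *v (A *v xt i + B *v y i - b)) + H *v (y i - y (i - 1))) = sg i"
      unfolding sg_def dy_def q_def[symmetric] by (simp add: matrix_vector_mult_diff_distrib algebra_simps)
    ultimately show ?thesis by simp
  qed
  have vsg: "v i = sg i - transpose B *v \<gamma>t i" if "i \<ge> 1" for i
  proof -
    have "v i = H *v dy i + ((\<tau> - \<tau> * \<theta> + \<theta>) * \<beta> / s) *\<^sub>R (transpose B *v p i)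
          - (\<tau> / s) *\<^sub>R (transpose B *v ((\<tau> * \<beta>) *\<^sub>R p i + (s * \<beta>) *\<^sub>R q i))"
      using v_def[OF that] gdiff[OF that] unfolding p_def dy_def s_def
      by (simp add: matrix_vector_mult_add_rdistrib scaleR_matrix_vector_assoc[symmetric] matrix_vector_mul_assoc[symmetric])
    also have "\<dots> = H *v dy i + (((\<tau> - \<tau> * \<theta> + \<theta>) * \<beta> / s) - (\<tau> / s) * (\<tau> * \<beta>)) *\<^sub>R (transpose B *v p i)
          - ((\<tau> / s) * (s * \<beta>)) *\<^sub>R (transpose B *v q i)"
      by (simp add: matrix_vector_right_distrib matrix_vector_mult_scaleR algebra_simps)
    also have "((\<tau> - \<tau> * \<theta> + \<theta>) * \<beta> / s) - (\<tau> / s) * (\<tau> * \<beta>) = (1 - \<tau>) * \<beta>"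
      using s0 unfolding th_s by (simp add: field_simps)
    also have "(\<tau> / s) * (s * \<beta>) = \<tau> * \<beta>" using s0 by simp
    also have "H *v dy i + ((1 - \<tau>) * \<beta>) *\<^sub>R (transpose B *v p i) - (\<tau> * \<beta>) *\<^sub>R (transpose B *v q i)
         = sg i - transpose B *v \<gamma>t i"
    proof -
      have "\<gamma>h i - \<gamma>t i = ((1 - \<tau>) * \<beta>) *\<^sub>R (p i + q i)" using gh[OF that] gt[OF that] by (simp add: algebra_simps)
      hence "transpose B *v \<gamma>h i - transpose B *v \<gamma>t i = ((1 - \<tau>) * \<beta>) *\<^sub>R (transpose B *v p i) + ((1 - \<tau>) * \<beta>) *\<^sub>R (transpose B *v q i)"
        by (metis matrix_vector_mult_diff_distrib matrix_vector_mult_scaleR matrix_vector_right_distrib scaleR_add_right)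
      thus ?thesis unfolding sg_def by (simp add: algebra_simps)
    qed
    finally show ?thesis .
  qed
  have usub: "u i + transpose A *v \<gamma>t i \<in> subdiff f (xt i)" if "i \<ge> 1" for i
    using step_u[OF that] by auto
  have Ginv: "\<And>z. G *v (matrix_inv G *v z) = z" by (rule posdef_Ginv[OF G_pd])
  define z where "z i = (x i, y i, \<gamma> i)" for i
  define zt where "zt i = (xt i, y i, \<gamma>t i)" for i
  define rr where "rr i = (u i, v i, w i)" for i
  define Mop where "Mop = M_op G H B \<beta> \<tau> \<theta>"
  have rM: "rr i = Mop (z (i - 1) - z i)" if "i \<ge> 1" for i
  proof -
    have "G *v (x (i - 1) - x i) = u i" using step_x[OF that] Ginv by simp
    thus ?thesis unfolding rr_def Mop_def z_def M_op_def using v_def[OF that] w_def[OF that] by simp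
  qed
  have part1: "\<forall>k\<ge>1. u k \<in> {s - transpose A *v \<gamma>t k | s. s \<in> subdiff f (xt k)} \<and>
      v k \<in> {s - transpose B *v \<gamma>t k | s. s \<in> subdiff g (y k)} \<and>
      w k = A *v xt k + B *v y k - b"
    using step_u vsg sg_sub wq unfolding q_def by blast
  have Mlin: "linear Mop" unfolding Mop_def by (rule Mop_linear)
  have Msym: "\<And>a c. inner (Mop a) c = inner a (Mop c)" unfolding Mop_def by (rule Mop_sym[OF Gsym Hsym])
  have Mpsd: "\<And>a. 0 \<le> inner (Mop a) a" unfolding Mop_def by (rule Mop_psd[OF G_pd H_psd t1 r(3) \<beta>_pos])
  have eig: "0 \<le> largest_eigenvalue Mop \<and> (\<forall>a. (norm (Mop a))^2 \<le> largest_eigenvalue Mop * inner (Mop a) a)"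
    by (rule eig_bound[OF Mlin Msym Mpsd])
  define Mq where "Mq a = inner (Mop a) a" for a
  have Mq3: "Mq (a1, a2, a3) = qnorm2 G a1 + qnorm2 H a2 + \<beta> * (1 - \<tau>) * (norm (B *v a2))^2
     + (norm (a3 - (\<tau> * \<beta>) *\<^sub>R (B *v a2)))^2 / (s * \<beta>)" for a1 a2 a3
    unfolding Mq_def Mop_def s_def using r(3) \<beta>_pos by (intro Mop_quad) auto
  define PP where "PP i = inner (p i) (p i)" for i
  define PQ where "PQ i = inner (p i) (q i)" for i
  define QQ where "QQ i = inner (q i) (q i)" for i
  define HH where "HH i = qnorm2 H (dy i)" for i
  define E where "E i = Mq (zt i - z i)" for i
  define D where "D i = Mq (zt i - z (i - 1))" for i
  have qH0: "qnorm2 H 0 = 0" unfolding qnorm2_def by simp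
  have qHneg: "qnorm2 H (- a) = qnorm2 H a" for a
  proof -
    have "H *v (- a) = - (H *v a)" using matrix_vector_mult_diff_distrib[of H 0 a] by simp
    thus ?thesis unfolding qnorm2_def by simp
  qed
  have Eform: "E i = qnorm2 G (xt i - x i) + \<beta>^2 * ((1-\<tau>)^2*PP i - 2*(1-\<tau>)*(s-1)*PQ i + (s-1)^2*QQ i) / (s*\<beta>)"
    if "i \<ge> 1" for i
  proof -
    have eq: "\<gamma>t i - \<gamma> i = (-(1-\<tau>)*\<beta>) *\<^sub>R p i + ((s-1)*\<beta>) *\<^sub>R q i"
      using gt[OF that] gk[OF that] unfolding th_s by (simp add: algebra_simps)
    have "(norm (\<gamma>t i - \<gamma> i))^2 = \<beta>^2 * ((1-\<tau>)^2*PP i - 2*(1-\<tau>)*(s-1)*PQ i + (s-1)^2*QQ i)"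
      unfolding eq norm2_lin PP_def PQ_def QQ_def by (simp add: power2_eq_square algebra_simps)
    thus ?thesis unfolding E_def zt_def z_def using Mq3 qH0 by simp
  qed
  have Dform: "D i = qnorm2 G (xt i - x (i - 1)) + HH i + \<beta> * (1 - \<tau>) * PP i + \<beta>^2 * ((1-\<tau>)^2*PP i + 2*(1-\<tau>)*PQ i + QQ i) / (s*\<beta>)"
    if "i \<ge> 1" for i
  proof -
    have By: "B *v (y i - y (i - 1)) = - p i" unfolding p_def by (simp add: matrix_vector_mult_diff_distrib)
    have eq: "\<gamma>t i - \<gamma> (i - 1) - (\<tau> * \<beta>) *\<^sub>R (- p i) = (-(1-\<tau>)*\<beta>) *\<^sub>R p i + (-\<beta>) *\<^sub>R q i"
      using gt[OF that] by (simp add: algebra_simps)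
    have "(norm (\<gamma>t i - \<gamma> (i - 1) - (\<tau> * \<beta>) *\<^sub>R (- p i)))^2 = \<beta>^2 * ((1-\<tau>)^2*PP i + 2*(1-\<tau>)*PQ i + QQ i)"
      unfolding eq norm2_lin PP_def PQ_def QQ_def by (simp add: power2_eq_square algebra_simps)
    moreover have "qnorm2 H (y i - y (i - 1)) = HH i" unfolding HH_def dy_def
      using qHneg[of "y (i - 1) - y i"] by simp
    moreover have "(norm (- p i))^2 = PP i" unfolding PP_def by (simp add: power2_norm_eq_inner)
    ultimately show ?thesis unfolding D_def zt_def z_def using Mq3 By by simp
  qed
  have errR: "E i \<le> \<sigma>' * D i - (\<beta>/s)*(phi_hat st \<tau> \<theta> \<sigma>' * PP i + 2 * phi st \<tau> \<theta> \<sigma>' * PQ i + phi_tilde st \<tau> \<theta> \<sigma>' * QQ i) - \<sigma>' * HH i"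
    if "i \<ge> 1" "sh \<le> \<sigma>'" for i \<sigma>'
  proof -
    have xe: "xt i - x (i - 1) + matrix_inv G *v u i = xt i - x i" using step_x[OF that(1)] by simp
    have eq: "\<gamma>t i - \<gamma> (i - 1) = (-\<beta>) *\<^sub>R p i + (-\<beta>) *\<^sub>R q i"
      using gt[OF that(1)] by (simp add: algebra_simps)
    have "(norm (\<gamma>t i - \<gamma> (i - 1)))^2 = \<beta>^2 * (PP i + 2 * PQ i + QQ i)" unfolding eq norm2_lin PP_def PQ_def QQ_def
      by (simp add: power2_eq_square algebra_simps)
    hence "st / \<beta> * (norm (\<gamma>t i - \<gamma> (i - 1)))^2 = st * \<beta> * (PP i + 2 * PQ i + QQ i)"
      using \<beta>_pos by (simp add: power2_eq_square)
    hence GEb: "qnorm2 G (xt i - x i) \<le> st * \<beta> * (PP i + 2 * PQ i + QQ i) + sh * qnorm2 G (xt i - x (i - 1))"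
      using step_inexact[OF that(1)] unfolding xe by simp
    show ?thesis unfolding Eform[OF that(1)] Dform[OF that(1)]
      using err_real[OF \<beta>_pos s0 s_def GEb Gpsd that(2)] by simp
  qed
  define \<phi> where "\<phi> = phi st \<tau> \<theta> \<sigma>"
  define \<phi>h where "\<phi>h = phi_hat st \<tau> \<theta> \<sigma>"
  define \<phi>t where "\<phi>t = phi_tilde st \<tau> \<theta> \<sigma>"
  have \<sigma>0: "\<sigma> \<ge> 0" using sh \<sigma>_range by simp
  define \<eta>' where "\<eta>' i = (\<beta>/s)*\<phi>t*QQ i + \<phi>/(s*(1+\<tau>))*HH i" for i
  have HH0: "\<And>i. HH i \<ge> 0" unfolding HH_def by (rule Hpsd)
  have PP0: "\<And>i. PP i \<ge> 0" unfolding PP_def by simp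
  have QQ0: "\<And>i. QQ i \<ge> 0" unfolding QQ_def by simp
  have step_ge2: "E i \<le> \<sigma> * D i + \<eta>' (i - 1) - \<eta>' i" if "i \<ge> 2" for i
  proof -
    define j where "j = i - 1"
    have i1: "i \<ge> 1" and j1: "j \<ge> 1" and jj: "i - 1 = j" using that unfolding j_def by auto
    have yy: "y i - y j = - dy i" unfolding dy_def jj by simp
    have Bdy: "B *v dy i = p i" unfolding dy_def p_def by simp
    have ghd: "\<gamma>h i - \<gamma>h j = - (\<theta>*\<beta>) *\<^sub>R q j - (\<tau>*\<beta>) *\<^sub>R (p i + q i)"
    proof -
      have "\<gamma>h i - \<gamma>h j = (\<gamma> j - (\<tau> * \<beta>) *\<^sub>R (p i + q i)) - (\<gamma> (j - 1) - (\<tau> * \<beta>) *\<^sub>R (p j + q j))"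
        using gh[OF i1] gh[OF j1] unfolding jj by simp
      also have "\<dots> = ((\<gamma> (j - 1) - (\<tau> * \<beta>) *\<^sub>R (p j + q j) - (\<theta> * \<beta>) *\<^sub>R q j) - (\<tau> * \<beta>) *\<^sub>R (p i + q i)) - (\<gamma> (j - 1) - (\<tau> * \<beta>) *\<^sub>R (p j + q j))"
        using gk[OF j1] by simp
      also have "\<dots> = - (\<theta>*\<beta>) *\<^sub>R q j - (\<tau>*\<beta>) *\<^sub>R (p i + q i)" by (simp add: algebra_simps)
      finally show ?thesis .
    qed
    have sgd: "sg i - sg j = transpose B *v (\<gamma>h i - \<gamma>h j) - \<beta> *\<^sub>R (transpose B *v (q i - q j)) + (H *v dy i - H *v dy j)"
      unfolding sg_def by (simp add: matrix_vector_mult_diff_distrib algebra_simps)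
    have adjm: "inner (transpose B *v X) (dy i) = inner X (p i)" for X
      unfolding Bdy[symmetric] by (rule adj)
    have "inner (sg i - sg j) (y i - y j) = - inner (\<gamma>h i - \<gamma>h j) (p i) + \<beta> * inner (q i - q j) (p i)
          - inner (H *v dy i - H *v dy j) (dy i)"
      unfolding sgd yy by (simp add: inner_add_left inner_diff_left adjm)
    also have "\<dots> = (1+\<tau>)*\<beta>*PQ i + \<tau>*\<beta>*PP i - (1-\<theta>)*\<beta>*inner (q j) (p i) - HH i + inner (H *v dy j) (dy i)"
      unfolding ghd PQ_def PP_def HH_def qnorm2_def
      by (simp add: inner_add_left inner_diff_left inner_commute[of "q i" "p i"] algebra_simps)
    finally have mono: "(1+\<tau>)*\<beta>*PQ i + \<tau>*\<beta>*PP i - (1-\<theta>)*\<beta>*inner (q j) (p i) - HH i + inner (H *v dy j) (dy i) \<ge> 0"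
      using subdiff_mono[OF g_pcc(1) sg_sub[OF i1] sg_sub[OF j1]] by simp
    have hx: "2 * inner (H *v dy j) (dy i) \<le> HH i + HH j"
    proof -
      have "0 \<le> qnorm2 H (dy i - dy j)" by (rule Hpsd)
      also have "qnorm2 H (dy i - dy j) = HH i - 2 * inner (H *v dy j) (dy i) + HH j"
        unfolding qnorm2_def HH_def using sym_inner[OF Hsym, of "dy i" "dy j"]
        by (simp add: matrix_vector_mult_diff_distrib inner_diff_left inner_diff_right inner_commute[of "dy j" "H *v dy i"] algebra_simps)
          (simp add: inner_commute)
      finally show ?thesis by simp
    qed
    have sos: "0 \<le> ((1-\<theta>)*\<phi>/(1+\<tau>))^2*PP i + 2*((1-\<theta>)*\<phi>/(1+\<tau>))*\<phi>t*inner (q j) (p i) + \<phi>t^2*QQ j"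
    proof -
      have "0 \<le> (norm (((1-\<theta>)*\<phi>/(1+\<tau>)) *\<^sub>R p i + \<phi>t *\<^sub>R q j))^2" by simp
      thus ?thesis unfolding norm2_lin PP_def QQ_def by (simp add: inner_commute)
    qed
    have \<phi>b: "((1 + \<tau>) * \<phi>h - 2 * \<tau> * \<phi>) * (1 + \<tau>) * \<phi>t - (1 - \<theta>)^2 * \<phi>^2 \<ge> 0"
      using \<sigma>_phi(4) unfolding phi_bar_def \<phi>_def \<phi>h_def \<phi>t_def .
    have "0 \<le> (\<beta>/s)*(\<phi>h*PP i + 2*\<phi>*PQ i + \<phi>t*QQ i) + \<sigma>*HH i
              + ((\<beta>/s)*\<phi>t*QQ j + \<phi>/(s*(1+\<tau>))*HH j) - ((\<beta>/s)*\<phi>t*QQ i + \<phi>/(s*(1+\<tau>))*HH i)"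
      by (rule step_ge2_real[OF \<beta>_pos s0 w0 \<sigma>_phi(1)[folded \<phi>_def] \<sigma>_phi(3)[folded \<phi>t_def] \<phi>b mono hx sos PP0 \<sigma>0 HH0])
    moreover have "E i \<le> \<sigma> * D i - (\<beta>/s)*(\<phi>h*PP i + 2*\<phi>*PQ i + \<phi>t*QQ i) - \<sigma>*HH i"
      using errR[OF i1 \<sigma>_range(1)] unfolding \<phi>_def \<phi>h_def \<phi>t_def .
    ultimately show ?thesis unfolding \<eta>'_def jj by linarith
  qed
  have kkt_unf: "transpose A *v gs \<in> subdiff f xs \<and> transpose B *v gs \<in> subdiff g ys \<and> A *v xs + B *v ys - b = 0"
    if "(xs, ys, gs) \<in> kkt_set f g A B b" for xs ys gs
    using that unfolding kkt_set_def by simp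
  have hpe: "Mq (zs - z i) \<le> Mq (zs - z (i - 1)) + E i - D i" if zsk: "zs \<in> kkt_set f g A B b" and i1: "i \<ge> 1" for zs i
  proof -
    obtain xs ys gs where zs: "zs = (xs, ys, gs)" by (cases zs) auto
    have k: "transpose A *v gs \<in> subdiff f xs" "transpose B *v gs \<in> subdiff g ys" "A *v xs + B *v ys - b = 0"
      using kkt_unf zsk unfolding zs by blast+
    have m1: "0 \<le> inner ((u i + transpose A *v \<gamma>t i) - transpose A *v gs) (xt i - xs)"
      by (rule subdiff_mono[OF f_pcc(1) usub[OF i1] k(1)])
    have m2: "0 \<le> inner (sg i - transpose B *v gs) (y i - ys)"
      by (rule subdiff_mono[OF g_pcc(1) sg_sub[OF i1] k(2)])
    have e1: "inner ((u i + transpose A *v \<gamma>t i) - transpose A *v gs) (xt i - xs) = inner (u i) (xt i - xs) + inner (\<gamma>t i - gs) (A *v xt i - A *v xs)"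
      by (simp add: inner_add_left inner_diff_left adj matrix_vector_mult_diff_distrib inner_diff_right)
    have e2: "inner (sg i - transpose B *v gs) (y i - ys) = inner (v i) (y i - ys) + inner (\<gamma>t i - gs) (B *v y i - B *v ys)"
      using vsg[OF i1] by (simp add: inner_add_left inner_diff_left adj matrix_vector_mult_diff_distrib inner_diff_right)
    have bb: "b = A *v xs + B *v ys" using k(3) by (simp add: algebra_simps)
    have "inner (rr i) (zt i - zs) = inner (u i) (xt i - xs) + inner (v i) (y i - ys) + inner (w i) (\<gamma>t i - gs)"
      unfolding rr_def zt_def zs by simp
    also have "w i = (A *v xt i - A *v xs) + (B *v y i - B *v ys)" unfolding wq[OF i1] q_def bb by (simp add: algebra_simps)
    also have "inner ((A *v xt i - A *v xs) + (B *v y i - B *v ys)) (\<gamma>t i - gs)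
       = inner (\<gamma>t i - gs) (A *v xt i - A *v xs) + inner (\<gamma>t i - gs) (B *v y i - B *v ys)"
      by (simp add: inner_commute inner_add_right)
    finally have "inner (rr i) (zt i - zs) \<ge> 0" using m1 m2 e1 e2 by linarith
    moreover have "Mq (zs - z i) = Mq (zs - z (i - 1)) + E i - D i - 2 * inner (rr i) (zt i - zs)"
      unfolding Mq_def E_def D_def rM[OF i1] by (rule hpe_id[OF Mlin Msym])
    ultimately show ?thesis by simp
  qed
  have parz: "Mq (z (i - 1) - z i) \<le> 2 * E i + 2 * D i" for i
  proof -
    have "z (i - 1) - z i = (zt i - z i) - (zt i - z (i - 1))" by simp
    thus ?thesis unfolding Mq_def E_def D_def using par_ineq[OF Mlin Msym Mpsd] by metis
  qed
  define vth where "vth = vartheta st \<tau> \<theta>"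
  have vt0: "vth > 0" unfolding vth_def by (rule vartheta_pos[OF region st(1)])
  have \<phi>0: "\<phi> \<ge> 0" and \<phi>h0: "\<phi>h \<ge> 0" and \<phi>t0: "\<phi>t > 0"
    using \<sigma>_phi unfolding \<phi>_def \<phi>h_def \<phi>t_def by auto
  define K where "K = 4*((1+\<tau>)+vth)*\<phi>/(s*(1+\<tau>)* vth)"
  have K0: "K \<ge> 0" unfolding K_def using vt0 \<phi>0 s0 w0 by simp
  have Mq0: "\<And>a. Mq a \<ge> 0" unfolding Mq_def by (rule Mpsd)
  have eta'0: "\<And>i. \<eta>' i \<ge> 0" unfolding \<eta>'_def using \<beta>_pos s0 \<phi>t0 QQ0 \<phi>0 w0 HH0 by simp
  have step1: "E 1 \<le> \<sigma> * D 1 + K * Mq (zs - z 0) - \<eta>' 1" if zsk: "zs \<in> kkt_set f g A B b" for zs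
  proof -
    obtain xs ys gs where zs: "zs = (xs, ys, gs)" by (cases zs) auto
    define d where "d = Mq (zs - z 0)"
    have h0: "Mq (zs - z 1) \<le> d + E 1 - D 1" using hpe[OF zsk, of 1] unfolding d_def by simp
    have e1: "E 1 \<le> 1 * D 1 - (\<beta>/s)*(phi_hat st \<tau> \<theta> 1 * PP 1 + 2 * phi st \<tau> \<theta> 1 * PQ 1 + phi_tilde st \<tau> \<theta> 1 * QQ 1) - 1 * HH 1"
      using errR[of 1 1] sh by simp
    have ph1: "(\<beta>/s)*(phi_hat st \<tau> \<theta> 1 * PP 1 + 2 * phi st \<tau> \<theta> 1 * PQ 1 + phi_tilde st \<tau> \<theta> 1 * QQ 1)
        = \<beta>*(1-\<tau>-st)*(PP 1 + 2*PQ 1 + QQ 1) + \<beta>*(1-\<theta>)*QQ 1"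
      unfolding phi_hat_def phi_def phi_tilde_def th_s using s0 by (simp add: field_simps power2_eq_square)
    have h1: "Mq (zs - z 1) + HH 1 + \<beta>*(1-\<tau>-st)*(PP 1 + 2*PQ 1 + QQ 1) + \<beta>*(1-\<theta>)*QQ 1 \<le> d"
      using h0 e1 ph1 by simp
    define Y0 where "Y0 = B *v (ys - y 0)"
    define W0 where "W0 = (gs - \<gamma> 0) - (\<tau> * \<beta>) *\<^sub>R Y0"
    define Y1 where "Y1 = B *v (ys - y 1)"
    define W1 where "W1 = (gs - \<gamma> 1) - (\<tau> * \<beta>) *\<^sub>R Y1"
    have nn: "0 \<le> qnorm2 G a + qnorm2 H c" for a c using Gpsd Hpsd by (simp add: add_nonneg_nonneg)
    have N0: "\<beta> * (1 - \<tau>) * (norm Y0)^2 + (norm W0)^2 / (s * \<beta>) \<le> d"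
      unfolding d_def zs z_def Y0_def W0_def using Mq3 nn by simp
    have N1: "\<beta> * (1 - \<tau>) * (norm Y1)^2 + (norm W1)^2 / (s * \<beta>) \<le> Mq (zs - z 1)"
      unfolding zs z_def Y1_def W1_def using Mq3 nn by simp
    have Y1e: "Y1 = Y0 + p 1" unfolding Y1_def Y0_def p_def by (simp add: matrix_vector_mult_diff_distrib)
    have W1e: "W1 = W0 + (s * \<beta>) *\<^sub>R q 1"
    proof -
      have "gs - \<gamma> 1 = (gs - \<gamma> 0) + ((\<tau> * \<beta>) *\<^sub>R p 1 + (s * \<beta>) *\<^sub>R q 1)"
        using gdiff[of 1] by (simp add: algebra_simps)
      thus ?thesis unfolding W1_def W0_def Y1e by (simp add: algebra_simps)
    qed
    have hp1: "(norm (p 1))^2 / 2 \<le> (norm Y0)^2 + (norm Y1)^2" unfolding Y1e by (rule half_par)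
    have hp2: "(norm ((s * \<beta>) *\<^sub>R q 1))^2 / 2 \<le> (norm W0)^2 + (norm W1)^2" unfolding W1e by (rule half_par)
    have f1: "\<beta> * (1 - \<tau>) * ((norm (p 1))^2 / 2) \<le> \<beta> * (1 - \<tau>) * ((norm Y0)^2 + (norm Y1)^2)"
      using hp1 \<beta>_pos t1 by (intro mult_left_mono) auto
    have f2: "((norm ((s * \<beta>) *\<^sub>R q 1))^2 / 2) / (s * \<beta>) \<le> ((norm W0)^2 + (norm W1)^2) / (s * \<beta>)"
      using hp2 \<beta>_pos s0 by (intro divide_right_mono) auto
    have f3: "((norm ((s * \<beta>) *\<^sub>R q 1))^2 / 2) / (s * \<beta>) = \<beta> * s * QQ 1 / 2"
      unfolding QQ_def power2_norm_eq_inner using \<beta>_pos s0 by (simp add: power2_eq_square)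
    have f4: "(norm (p 1))^2 = PP 1" unfolding PP_def by (simp add: power2_norm_eq_inner)
    have "\<beta>*((1-\<tau>)*PP 1 + s*QQ 1)/2 = \<beta> * (1 - \<tau>) * ((norm (p 1))^2 / 2) + ((norm ((s * \<beta>) *\<^sub>R q 1))^2 / 2) / (s * \<beta>)"
      unfolding f3 f4 by (simp add: field_simps)
    also have "\<dots> \<le> \<beta> * (1 - \<tau>) * ((norm Y0)^2 + (norm Y1)^2) + ((norm W0)^2 + (norm W1)^2) / (s * \<beta>)"
      using f1 f2 by (rule add_mono)
    also have "\<dots> = (\<beta> * (1 - \<tau>) * (norm Y0)^2 + (norm W0)^2 / (s * \<beta>)) + (\<beta> * (1 - \<tau>) * (norm Y1)^2 + (norm W1)^2 / (s * \<beta>))"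
      by (simp add: algebra_simps add_divide_distrib)
    finally have N01: "\<beta>*((1-\<tau>)*PP 1 + s*QQ 1)/2 \<le> (\<beta> * (1 - \<tau>) * (norm Y0)^2 + (norm W0)^2 / (s * \<beta>)) + (\<beta> * (1 - \<tau>) * (norm Y1)^2 + (norm W1)^2 / (s * \<beta>))" .
    have CS: "(PQ 1)^2 \<le> PP 1 * QQ 1" unfolding PQ_def PP_def QQ_def by (rule Cauchy_Schwarz_ineq)
    have a0: "1 - \<tau> - st > 0" using r by simp
    have star: "-2*\<beta>*(1+\<tau>)*PQ 1 + HH 1 \<le> (4*((1+\<tau>)+vth)/vth) * d"
      by (rule step1_real[OF \<beta>_pos refl w0 a0 st(1) vt0 vth_def[unfolded vartheta_def] s_def h1 N0 N1 N01 HH0 PP0 QQ0 CS])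
    have eR: "E 1 \<le> \<sigma> * D 1 - (\<beta>/s)*(\<phi>h*PP 1 + 2*\<phi>*PQ 1 + \<phi>t*QQ 1) - \<sigma>*HH 1"
      using errR[OF _ \<sigma>_range(1), of 1] unfolding \<phi>_def \<phi>h_def \<phi>t_def by simp
    have "E 1 \<le> \<sigma> * D 1 + (4*((1+\<tau>)+vth)*\<phi>/(s*(1+\<tau>)* vth))*d - ((\<beta>/s)*\<phi>t*QQ 1 + \<phi>/(s*(1+\<tau>))*HH 1)"
      by (rule step1_combine[OF s0 w0 \<phi>0 \<phi>h0 PP0 \<sigma>0 HH0 \<beta>_pos vt0 eR star])
    thus ?thesis unfolding K_def \<eta>'_def d_def by simp
  qed
  have C1e: "C1_const st \<tau> \<theta> \<sigma> = (1 + \<sigma> + 2 * K) / (1 - \<sigma>)"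
  proof -
    have "8 * (1 + \<tau> + vartheta st \<tau> \<theta>) * phi st \<tau> \<theta> \<sigma> / ((\<tau> + \<theta>) * (1 + \<tau>) * vartheta st \<tau> \<theta>) = 2 * K"
      unfolding K_def vth_def[symmetric] \<phi>_def[symmetric] s_def[symmetric] by (simp add: algebra_simps)
    thus ?thesis unfolding C1_const_def by simp
  qed
  have C1pos: "C1_const st \<tau> \<theta> \<sigma> > 0" unfolding C1e using \<sigma>0 \<sigma>_range K0 by simp
  have bound_zs: "(\<Sum>i=1..k. Mq (z (i - 1) - z i)) \<le> 2 * C1_const st \<tau> \<theta> \<sigma> * Mq (zs - z 0)"
    if zsk: "zs \<in> kkt_set f g A B b" for zs k
  proof -
    define d where "d = Mq (zs - z 0)"
    define \<eta> where "\<eta> i = (if i = 0 then K * d else \<eta>' i)" for i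
    have d0: "d \<ge> 0" unfolding d_def by (rule Mq0)
    have eta0: "\<eta> i \<ge> 0" for i unfolding \<eta>_def using K0 d0 eta'0 by simp
    have stepall: "E i \<le> \<sigma> * D i + \<eta> (i - 1) - \<eta> i" if "i \<ge> 1" for i
    proof (cases "i = 1")
      case True then show ?thesis using step1[OF zsk] unfolding \<eta>_def d_def by simp
    next
      case False
      hence "i \<ge> 2" "i - 1 \<noteq> 0" "i \<noteq> 0" using that by auto
      then show ?thesis using step_ge2[of i] unfolding \<eta>_def by simp
    qed
    have ind: "Mq (zs - z k) + \<eta> k + (1-\<sigma>) * (\<Sum>i=1..k. D i) \<le> d + \<eta> 0 \<and>
       (\<Sum>i=1..k. Mq (z (i - 1) - z i)) \<le> 2*(1+\<sigma>)*(\<Sum>i=1..k. D i) + 2*\<eta> 0 - 2*\<eta> k" for k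
    proof (induction k)
      case 0
      then show ?case unfolding d_def by simp
    next
      case (Suc k)
      have h: "Mq (zs - z (Suc k)) \<le> Mq (zs - z k) + E (Suc k) - D (Suc k)" using hpe[OF zsk, of "Suc k"] by simp
      have st': "E (Suc k) \<le> \<sigma> * D (Suc k) + \<eta> k - \<eta> (Suc k)" using stepall[of "Suc k"] by simp
      have pz: "Mq (z k - z (Suc k)) \<le> 2 * E (Suc k) + 2 * D (Suc k)" using parz[of "Suc k"] by simp
      show ?case using Suc h st' pz by (simp add: algebra_simps)
    qed
    have sD: "(1-\<sigma>) * (\<Sum>i=1..k. D i) \<le> d + \<eta> 0" using ind[of k] Mq0[of "zs - z k"] eta0[of k] by linarith
    hence sD': "(\<Sum>i=1..k. D i) \<le> (d + \<eta> 0) / (1 - \<sigma>)" using \<sigma>_range by (simp add: field_simps mult.commute)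
    have "(\<Sum>i=1..k. Mq (z (i - 1) - z i)) \<le> 2*(1+\<sigma>)*(\<Sum>i=1..k. D i) + 2*\<eta> 0" using ind[of k] eta0[of k] by linarith
    also have "\<dots> \<le> 2*(1+\<sigma>)*((d + \<eta> 0) / (1 - \<sigma>)) + 2*\<eta> 0"
      using sD' \<sigma>0 by (intro add_right_mono mult_left_mono) auto
    also have "\<dots> = 2 * C1_const st \<tau> \<theta> \<sigma> * d"
      unfolding C1e \<eta>_def using \<sigma>_range by (simp add: field_simps)
    finally show ?thesis unfolding d_def .
  qed
  define lam where "lam = largest_eigenvalue Mop"
  define d0 where "d0 = d0_val f g A B b G H \<beta> \<tau> \<theta> (x 0, y 0, \<gamma> 0)"
  define C1 where "C1 = C1_const st \<tau> \<theta> \<sigma>"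
  define S where "S k = (\<Sum>i=1..k. Mq (z (i - 1) - z i))" for k
  have Sd0: "S k \<le> 2 * C1 * d0" for k
  proof -
    define X where "X = {inner (M_op G H B \<beta> \<tau> \<theta> (zs - (x 0, y 0, \<gamma> 0))) (zs - (x 0, y 0, \<gamma> 0)) | zs. zs \<in> kkt_set f g A B b}"
    have Xne: "X \<noteq> {}" using kkt_ne unfolding X_def by blast
    have "S k / (2 * C1) \<le> Inf X"
    proof (rule cInf_greatest[OF Xne])
      fix e assume "e \<in> X"
      then obtain zs where zs: "zs \<in> kkt_set f g A B b" and e: "e = Mq (zs - z 0)"
        unfolding X_def Mq_def Mop_def z_def by blast
      show "S k / (2 * C1) \<le> e" using bound_zs[OF zs, of k] C1pos unfolding e S_def C1_def
        by (simp add: field_simps mult.commute)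
    qed
    hence "S k / (2 * C1) \<le> d0" unfolding d0_def d0_val_def X_def .
    thus ?thesis using C1pos unfolding C1_def by (simp add: field_simps mult.commute)
  qed
  have lam0: "lam \<ge> 0" and lamb: "\<And>a. (norm (Mop a))^2 \<le> lam * Mq a" using eig unfolding lam_def Mq_def by auto
  have part2: "\<exists>i. 1 \<le> i \<and> i \<le> k \<and> Max {norm (u i), norm (v i), norm (w i)} \<le> sqrt (2 * lam * d0 * C1 / real k)"
    if k1: "k \<ge> 1" for k
  proof -
    have "\<exists>i\<in>{1..k}. Mq (z (i - 1) - z i) \<le> S k / real k"
    proof (rule ccontr)
      assume "\<not> ?thesis"
      hence lt: "\<And>i. i \<in> {1..k} \<Longrightarrow> S k / real k < Mq (z (i - 1) - z i)" by (meson not_le)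
      have "(\<Sum>i=1..k. S k / real k) < (\<Sum>i=1..k. Mq (z (i - 1) - z i))"
        using k1 by (intro sum_strict_mono lt) auto
      moreover have "(\<Sum>i=1..k. S k / real k) = S k" using k1 by simp
      ultimately show False unfolding S_def by simp
    qed
    then obtain i where i: "1 \<le> i" "i \<le> k" and mi: "Mq (z (i - 1) - z i) \<le> S k / real k" by auto
    have "(norm (rr i))^2 \<le> lam * Mq (z (i - 1) - z i)" unfolding rM[OF i(1)] by (rule lamb)
    also have "\<dots> \<le> lam * (S k / real k)" using mi lam0 by (rule mult_left_mono)
    also have "\<dots> \<le> lam * (2 * C1 * d0 / real k)" using Sd0[of k] lam0 k1 by (intro mult_left_mono divide_right_mono) auto
    also have "\<dots> = 2 * lam * d0 * C1 / real k" by simp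
    finally have nr: "norm (rr i) \<le> sqrt (2 * lam * d0 * C1 / real k)" using real_le_rsqrt by blast
    have "norm (u i) \<le> norm (rr i)" unfolding rr_def by (rule norm_fst_le)
    moreover have "norm (v i) \<le> norm (rr i)" unfolding rr_def using norm_fst_le[of "v i" "w i"] norm_snd_le[of "(v i, w i)" "u i"] by simp
    moreover have "norm (w i) \<le> norm (rr i)" unfolding rr_def using norm_snd_le[of "w i" "v i"] norm_snd_le[of "(v i, w i)" "u i"] by simp
    ultimately show ?thesis using i nr by auto
  qed
  show ?thesis using part1 part2 unfolding lam_def Mop_def d0_def C1_def by blast
qed

end
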